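(* Let $m,n,t$ be positive integers, let $p\in\mathbb{R}[x_1,\dots,x_n]$ be a form of degree $t$, let $T_p\in\mathbb{R}^{n\times\cdots\times n}$ be its associated symmetric $t$-tensor, and let $A_1,\dots,A_n\in L(\mathbb{R}^m)$ be pairwise commuting contractions. Then $$\|p\|_{\mathrm{cb}}\ge\Big\|\sum_{i_1,\dots,i_t=1}^n(T_p)_{i_1,\dots,i_t}A_{i_1}\cdots A_{i_t}\Big\|.$$
   Context: A form is a homogeneous polynomial; for $p(x)=\sum_{|\alpha|=t}c_\alpha x^\alpha$, $(T_p)_{i_1,\dots,i_t}=c_{e_{i_1}+\dots+e_{i_t}}/\tau(i_1,\dots,i_t)$ where $\tau$ is the number of distinct permutations of $(i_1,\dots,i_t)$. For a $t$-tensor $T$, $\|T\|_{\mathrm{cb}}=\sup\|\sum_{i_1,\dots,i_t}T_{i_1,\dots,i_t}U_1(i_1)\cdots U_t(i_t)\|$ over all $k$ and $k\times k$ unitaries $U_j(i)$; equivalently (by the Russo–Dye theorem) over all $k\times k$ contractions. With $(T\circ\sigma)_{i_1,\dots,i_t}=T_{i_{\sigma(1)},\dots,i_{\sigma(t)}}$, $\|p\|_{\mathrm{cb}}=\inf\{\sum_{\sigma\in S_t}\|T^\sigma\|_{\mathrm{cb}}:T_p=\sum_{\sigma\in S_t}T^\sigma\circ\sigma\}$. A contraction is a linear map of operator norm at most $1$; $\|\cdot\|$ is the operator norm. *)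

theory Defs
  imports "Jordan_Normal_Form.Matrix" "HOL-Combinatorics.Multiset_Permutations"
    "HOL-Combinatorics.Permutations" Complex_Main
begin

text \<open>Variables are indexed 0..n-1, tensor slots 0..t-1.
 A form of degree t in n variables is given by its coefficient function
 on monomials; the monomial x^alpha with alpha = e_(i_1)+...+e_(i_t) is
 encoded by the multiset of indices {i_1,...,i_t}.
 A t-tensor in R^(n x ... x n) is a function on index lists of length t
 with entries below n (values elsewhere are irrelevant).\<close>

definition is_form :: "nat \<Rightarrow> nat \<Rightarrow> (nat multiset \<Rightarrow> real) \<Rightarrow> bool" where
  "is_form n t c \<longleftrightarrow> (\<forall>a. c a \<noteq> 0 \<longrightarrow> size a = t \<and> set_mset a \<subseteq> {..<n})"

definition index_tuples :: "nat \<Rightarrow> nat \<Rightarrow> nat list set" where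
  "index_tuples n t = {is. length is = t \<and> set is \<subseteq> {..<n}}"

definition tau :: "nat list \<Rightarrow> nat" where
  "tau is = card (permutations_of_multiset (mset is))"

definition form_tensor :: "(nat multiset \<Rightarrow> real) \<Rightarrow> nat list \<Rightarrow> real" where
  "form_tensor c is = c (mset is) / real (tau is)"

definition vnorm :: "'a::real_normed_field vec \<Rightarrow> real" where
  "vnorm x = sqrt (\<Sum>i<dim_vec x. (norm (x $ i))\<^sup>2)"

definition opnorm :: "'a::real_normed_field mat \<Rightarrow> real" where
  "opnorm A = Sup {vnorm (mult_mat_vec A x) | x. x \<in> carrier_vec (dim_col A) \<and> vnorm x \<le> 1}"

definition contraction :: "'a::real_normed_field mat \<Rightarrow> bool" where
  "contraction A \<longleftrightarrow> opnorm A \<le> 1"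

definition adjoint :: "complex mat \<Rightarrow> complex mat" where
  "adjoint U = mat (dim_col U) (dim_row U) (\<lambda>(i,j). cnj (U $$ (j,i)))"

definition unitary :: "nat \<Rightarrow> complex mat \<Rightarrow> bool" where
  "unitary k U \<longleftrightarrow> U \<in> carrier_mat k k \<and> U * adjoint U = 1\<^sub>m k \<and> adjoint U * U = 1\<^sub>m k"

definition prod_mats :: "nat \<Rightarrow> 'a::semiring_1 mat list \<Rightarrow> 'a mat" where
  "prod_mats k Ms = foldr (\<lambda>M acc. M * acc) Ms (1\<^sub>m k)"

definition tensor_eval :: "nat \<Rightarrow> nat \<Rightarrow> nat \<Rightarrow> (nat list \<Rightarrow> 'a::comm_ring_1)
    \<Rightarrow> (nat \<Rightarrow> nat \<Rightarrow> 'a mat) \<Rightarrow> 'a mat" where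
  "tensor_eval n t k T M = mat k k (\<lambda>(r,s).
     \<Sum>is\<in>index_tuples n t. T is * prod_mats k (map (\<lambda>j. M j (is ! j)) [0..<t]) $$ (r,s))"

definition cb_norm :: "nat \<Rightarrow> nat \<Rightarrow> (nat list \<Rightarrow> real) \<Rightarrow> real" where
  "cb_norm n t T = Sup {opnorm (tensor_eval n t k (\<lambda>is. complex_of_real (T is)) U) | k U.
      k > 0 \<and> (\<forall>j<t. \<forall>i<n. unitary k (U j i))}"

definition tensor_perm :: "(nat list \<Rightarrow> real) \<Rightarrow> (nat \<Rightarrow> nat) \<Rightarrow> nat list \<Rightarrow> real" where
  "tensor_perm T \<sigma> is = T (map (\<lambda>j. is ! \<sigma> j) [0..<length is])"

definition form_cb_norm :: "nat \<Rightarrow> nat \<Rightarrow> (nat multiset \<Rightarrow> real) \<Rightarrow> real" where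
  "form_cb_norm n t c = Inf {(\<Sum>\<sigma>\<in>{\<sigma>. \<sigma> permutes {..<t}}. cb_norm n t (Ts \<sigma>)) | Ts.
      \<forall>is\<in>index_tuples n t.
        form_tensor c is = (\<Sum>\<sigma>\<in>{\<sigma>. \<sigma> permutes {..<t}}. tensor_perm (Ts \<sigma>) \<sigma> is)}"

end

theory Submission
  imports Defs "HOL-Analysis.L2_Norm"
begin

lemma vnorm_L2: "vnorm x = L2_set (\<lambda>i. norm (x$i)) {..<dim_vec x}"
  by (simp add: vnorm_def L2_set_def)

lemma vnorm_nonneg: "0 \<le> vnorm x"
  by (simp add: vnorm_L2)

lemma vnorm_comp_le: "i < dim_vec x \<Longrightarrow> norm (x$i) \<le> vnorm x"
  unfolding vnorm_L2 by (rule member_le_L2_set) auto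

lemma vnorm_le_sum: "vnorm x \<le> (\<Sum>i<dim_vec x. norm (x$i))"
  unfolding vnorm_L2 by (rule L2_set_le_sum) auto

lemma L2_set_sum_le:
  assumes "finite F"
  shows "L2_set (\<lambda>i. \<Sum>a\<in>F. g a i) A \<le> (\<Sum>a\<in>F. L2_set (g a) A)"
  using assms
proof (induction F rule: finite_induct)
  case empty
  then show ?case by (simp add: L2_set_def)
next
  case (insert x F)
  have "L2_set (\<lambda>i. \<Sum>a\<in>insert x F. g a i) A = L2_set (\<lambda>i. g x i + (\<Sum>a\<in>F. g a i)) A"
    using insert by simp
  also have "\<dots> \<le> L2_set (g x) A + L2_set (\<lambda>i. \<Sum>a\<in>F. g a i) A"
    by (rule L2_set_triangle_ineq)
  also have "\<dots> \<le> L2_set (g x) A + (\<Sum>a\<in>F. L2_set (g a) A)"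
    using insert by simp
  finally show ?case using insert by simp
qed

lemma vnorm_sum_le:
  fixes h :: "'b \<Rightarrow> nat \<Rightarrow> 'a::real_normed_field"
  assumes "finite F"
  shows "vnorm (vec K (\<lambda>r. \<Sum>a\<in>F. h a r)) \<le> (\<Sum>a\<in>F. vnorm (vec K (h a)))"
proof -
  have "vnorm (vec K (\<lambda>r. \<Sum>a\<in>F. h a r)) = L2_set (\<lambda>r. norm (\<Sum>a\<in>F. h a r)) {..<K}"
    unfolding vnorm_L2 by (auto intro!: L2_set_cong)
  also have "\<dots> \<le> L2_set (\<lambda>r. \<Sum>a\<in>F. norm (h a r)) {..<K}"
    by (rule L2_set_mono) (auto intro: norm_sum)
  also have "\<dots> \<le> (\<Sum>a\<in>F. L2_set (\<lambda>r. norm (h a r)) {..<K})"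
    by (rule L2_set_sum_le[OF assms])
  also have "\<dots> = (\<Sum>a\<in>F. vnorm (vec K (h a)))"
    by (intro sum.cong) (auto simp: vnorm_L2 intro!: L2_set_cong)
  finally show ?thesis .
qed

lemma vnorm_scale:
  fixes v :: "'a::real_normed_field vec"
  assumes "dim_vec v = K"
  shows "vnorm (vec K (\<lambda>r. c * v$r)) = norm c * vnorm v"
proof -
  have "vnorm (vec K (\<lambda>r. c * v$r)) = L2_set (\<lambda>r. norm c * norm (v$r)) {..<K}"
    unfolding vnorm_L2 by (auto intro!: L2_set_cong simp: norm_mult)
  also have "\<dots> = norm c * vnorm v"
    using assms by (simp add: vnorm_L2 L2_set_right_distrib)
  finally show ?thesis .
qed

lemma mult_mat_vec_entry:
  "r < dim_row A \<Longrightarrow> dim_vec x = dim_col A \<Longrightarrow> (A *\<^sub>v x) $ r = (\<Sum>s<dim_col A. A $$ (r,s) * x $ s)"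
  by (simp add: scalar_prod_def atLeast0LessThan)

lemma opnorm_bound:
  fixes A :: "'a::real_normed_field mat"
  assumes "x \<in> carrier_vec (dim_col A)" "vnorm x \<le> 1"
  shows "vnorm (A *\<^sub>v x) \<le> (\<Sum>r<dim_row A. \<Sum>s<dim_col A. norm (A $$ (r,s)))"
proof -
  have "vnorm (A *\<^sub>v x) \<le> (\<Sum>r<dim_row A. norm ((A *\<^sub>v x) $ r))"
    using vnorm_le_sum[of "A *\<^sub>v x"] by simp
  also have "\<dots> \<le> (\<Sum>r<dim_row A. \<Sum>s<dim_col A. norm (A $$ (r,s)))"
  proof (rule sum_mono)
    fix r assume r: "r \<in> {..<dim_row A}"
    have "norm ((A *\<^sub>v x) $ r) = norm (\<Sum>s<dim_col A. A $$ (r,s) * x $ s)"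
      using r assms by (subst mult_mat_vec_entry) auto
    also have "\<dots> \<le> (\<Sum>s<dim_col A. norm (A $$ (r,s) * x $ s))" by (rule norm_sum)
    also have "\<dots> \<le> (\<Sum>s<dim_col A. norm (A $$ (r,s)))"
    proof (rule sum_mono)
      fix s assume s: "s \<in> {..<dim_col A}"
      have "norm (x $ s) \<le> 1" using vnorm_comp_le[of s x] assms s by auto
      then show "norm (A $$ (r,s) * x $ s) \<le> norm (A $$ (r,s))"
        by (simp add: norm_mult mult_left_le)
    qed
    finally show "norm ((A *\<^sub>v x) $ r) \<le> (\<Sum>s<dim_col A. norm (A $$ (r,s)))" .
  qed
  finally show ?thesis .
qed

lemma opnorm_bdd:
  fixes A :: "'a::real_normed_field mat"
  shows "bdd_above {vnorm (mult_mat_vec A x) | x. x \<in> carrier_vec (dim_col A) \<and> vnorm x \<le> 1}"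
  unfolding bdd_above_def using opnorm_bound[of _ A] by blast

lemma opnorm_ge:
  fixes A :: "'a::real_normed_field mat"
  assumes "x \<in> carrier_vec (dim_col A)" "vnorm x \<le> 1"
  shows "vnorm (A *\<^sub>v x) \<le> opnorm A"
  unfolding opnorm_def by (rule cSup_upper[OF _ opnorm_bdd]) (use assms in blast)

lemma opnorm_le:
  fixes A :: "'a::real_normed_field mat"
  assumes "\<And>x. x \<in> carrier_vec (dim_col A) \<Longrightarrow> vnorm x \<le> 1 \<Longrightarrow> vnorm (A *\<^sub>v x) \<le> B"
  shows "opnorm A \<le> B"
proof -
  have "0\<^sub>v (dim_col A) \<in> carrier_vec (dim_col A)" "vnorm (0\<^sub>v (dim_col A) :: 'a vec) \<le> 1"
    by (auto simp: vnorm_def)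
  then show ?thesis unfolding opnorm_def
    by (intro cSup_least) (use assms in blast)+
qed

lemma vnorm_smult_vec:
  fixes x :: "'a::real_normed_field vec"
  shows "vnorm (c \<cdot>\<^sub>v x) = norm c * vnorm x"
  using vnorm_scale[of x "dim_vec x" c] by (simp add: smult_vec_def)

definition psd_on :: "nat set \<Rightarrow> (nat \<Rightarrow> nat \<Rightarrow> real) \<Rightarrow> bool" where
  "psd_on I M \<longleftrightarrow> (\<forall>x. 0 \<le> (\<Sum>i\<in>I. \<Sum>j\<in>I. x i * M i j * x j))"

lemma sum_two_support:
  fixes f :: "nat \<Rightarrow> real"
  assumes "finite I" "a \<in> I" "b \<in> I" "a \<noteq> b" "\<And>j. j \<in> I \<Longrightarrow> j \<noteq> a \<Longrightarrow> j \<noteq> b \<Longrightarrow> f j = 0"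
  shows "sum f I = f a + f b"
proof -
  have "sum f I = sum f {a,b}"
    by (rule sum.mono_neutral_right) (use assms in auto)
  then show ?thesis using assms by simp
qed

lemma sum_one_support:
  fixes f :: "nat \<Rightarrow> real"
  assumes "finite I" "a \<in> I" "\<And>j. j \<in> I \<Longrightarrow> j \<noteq> a \<Longrightarrow> f j = 0"
  shows "sum f I = f a"
proof -
  have "sum f I = sum f {a}"
    by (rule sum.mono_neutral_right) (use assms in auto)
  then show ?thesis by simp
qed

lemma psd_diag:
  assumes "finite I" "psd_on I M" "k \<in> I"
  shows "0 \<le> M k k"
proof -
  define x :: "nat \<Rightarrow> real" where "x j = (if j = k then 1 else 0)" for j
  have "0 \<le> (\<Sum>i\<in>I. \<Sum>j\<in>I. x i * M i j * x j)" using assms(2) unfolding psd_on_def by blast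
  also have "\<dots> = (\<Sum>i\<in>I. x i * M i k * x k)"
    by (intro sum.cong refl sum_one_support) (use assms in \<open>auto simp: x_def\<close>)
  also have "\<dots> = x k * M k k * x k"
    by (intro sum_one_support) (use assms in \<open>auto simp: x_def\<close>)
  also have "\<dots> = M k k" by (simp add: x_def)
  finally show ?thesis .
qed

lemma psd_zero_diag:
  assumes "finite I" "psd_on I M" "k \<in> I" "i \<in> I" "M k k = 0" "\<forall>i\<in>I. \<forall>j\<in>I. M i j = M j i"
  shows "M i k = 0"
proof (cases "i = k")
  case True then show ?thesis using assms by simp
next
  case False
  define c where "c = M i i + 1"
  define x :: "nat \<Rightarrow> real" where "x j = (if j = i then - M i k else if j = k then c else 0)" for j
  have d: "0 \<le> M i i" using psd_diag assms by blast
  have inner: "(\<Sum>j\<in>I. x l * M l j * x j) = x l * M l i * x i + x l * M l k * x k" if "l \<in> I" for l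
    by (rule sum_two_support) (use assms False in \<open>auto simp: x_def\<close>)
  have "0 \<le> (\<Sum>l\<in>I. \<Sum>j\<in>I. x l * M l j * x j)" using assms(2) unfolding psd_on_def by blast
  also have "\<dots> = (\<Sum>l\<in>I. x l * M l i * x i + x l * M l k * x k)"
    by (rule sum.cong) (auto simp: inner)
  also have "\<dots> = (x i * M i i * x i + x i * M i k * x k) + (x k * M k i * x i + x k * M k k * x k)"
    by (rule sum_two_support) (use assms False in \<open>auto simp: x_def\<close>)
  also have "\<dots> = - (M i k * M i k * (M i i + 2))"
    using assms False by (simp add: x_def c_def power2_eq_square algebra_simps)
  finally have "M i k * M i k * (M i i + 2) \<le> 0" by simp
  moreover have "M i i + 2 > 0" using d by simp
  ultimately have "M i k * M i k \<le> 0" by (simp add: mult_le_0_iff)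
  then show ?thesis by (metis mult_eq_0_iff not_square_less_zero order_antisym_conv zero_le_square)
qed

lemma cholesky:
  assumes "finite I" "\<forall>i\<in>I. \<forall>j\<in>I. M i j = M j i" "psd_on I M"
  shows "\<exists>b. \<forall>i\<in>I. \<forall>j\<in>I. (\<Sum>l\<in>I. b i l * b j l) = M i j"
  using assms
proof (induction I arbitrary: M rule: finite_induct)
  case empty
  then show ?case by simp
next
  case (insert k F)
  define a where "a = M k k"
  have fin: "finite (insert k F)" using insert.hyps by simp
  have a0: "0 \<le> a" unfolding a_def using psd_diag[OF fin insert.prems(2)] by simp
  have symM: "M i j = M j i" if "i \<in> insert k F" "j \<in> insert k F" for i j
    using insert.prems(1) that by blast
  define M' where "M' i j = M i j - M i k * M k j / a" for i j
  have sym': "\<forall>i\<in>F. \<forall>j\<in>F. M' i j = M' j i"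
  proof (intro ballI)
    fix i j assume "i \<in> F" "j \<in> F"
    then have e1: "M i j = M j i" and e2: "M j k * M k i = M i k * M k j"
      using symM[of i j] symM[of j k] symM[of k i] by auto
    show "M' i j = M' j i" unfolding M'_def e1 e2 ..
  qed
  have psd': "psd_on F M'"
    unfolding psd_on_def
  proof
    fix x :: "nat \<Rightarrow> real"
    define s where "s = (\<Sum>j\<in>F. M k j * x j)"
    define y where "y j = (if j = k then - s / a else x j)" for j
    have s': "(\<Sum>i\<in>F. x i * M i k) = s"
      unfolding s_def by (intro sum.cong refl) (simp add: symM)
    have Q: "(\<Sum>i\<in>F. \<Sum>j\<in>F. x i * M' i j * x j) =
        (\<Sum>i\<in>F. \<Sum>j\<in>F. x i * M i j * x j) - s * s / a"
    proof -
      have "(\<Sum>i\<in>F. \<Sum>j\<in>F. x i * M' i j * x j) =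
          (\<Sum>i\<in>F. \<Sum>j\<in>F. x i * M i j * x j - (x i * M i k) * (M k j * x j) / a)"
        by (intro sum.cong refl) (simp add: M'_def right_diff_distrib left_diff_distrib)
      also have "\<dots> = (\<Sum>i\<in>F. \<Sum>j\<in>F. x i * M i j * x j) -
          (\<Sum>i\<in>F. \<Sum>j\<in>F. (x i * M i k) * (M k j * x j)) / a"
        by (simp only: sum_subtractf sum_divide_distrib)
      also have "(\<Sum>i\<in>F. \<Sum>j\<in>F. (x i * M i k) * (M k j * x j)) =
          (\<Sum>i\<in>F. x i * M i k) * (\<Sum>j\<in>F. M k j * x j)"
        by (rule sum_product[symmetric])
      finally show ?thesis using s' s_def by simp
    qed
    have yF: "\<And>j. j \<in> F \<Longrightarrow> y j = x j" using insert.hyps by (auto simp: y_def)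
    have "(\<Sum>i\<in>insert k F. \<Sum>j\<in>insert k F. y i * M i j * y j) =
        (y k * M k k * y k + (\<Sum>j\<in>F. y k * M k j * y j)) +
        (\<Sum>i\<in>F. y i * M i k * y k + (\<Sum>j\<in>F. y i * M i j * y j))"
      using insert.hyps by simp
    also have "\<dots> = (y k * a * y k + y k * s) + (s * y k + (\<Sum>i\<in>F. \<Sum>j\<in>F. x i * M i j * x j))"
    proof -
      have p1: "(\<Sum>j\<in>F. y k * M k j * y j) = y k * s"
        unfolding s_def sum_distrib_left by (intro sum.cong refl) (simp add: yF)
      have p2: "(\<Sum>i\<in>F. y i * M i k * y k + (\<Sum>j\<in>F. y i * M i j * y j)) =
          s * y k + (\<Sum>i\<in>F. \<Sum>j\<in>F. x i * M i j * x j)"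
      proof -
        have "(\<Sum>i\<in>F. y i * M i k * y k + (\<Sum>j\<in>F. y i * M i j * y j)) =
            (\<Sum>i\<in>F. x i * M i k) * y k + (\<Sum>i\<in>F. \<Sum>j\<in>F. x i * M i j * x j)"
          unfolding sum.distrib sum_distrib_right by (intro arg_cong2[where f="(+)"] sum.cong refl) (simp_all add: yF)
        then show ?thesis using s' by simp
      qed
      show ?thesis using p1 p2 by (simp add: a_def)
    qed
    also have "\<dots> = (\<Sum>i\<in>F. \<Sum>j\<in>F. x i * M i j * x j) - s * s / a"
    proof (cases "a = 0")
      case True then show ?thesis by (simp add: y_def)
    next
      case False then show ?thesis by (simp add: y_def field_simps power2_eq_square)
    qed
    finally have "0 \<le> (\<Sum>i\<in>F. \<Sum>j\<in>F. x i * M i j * x j) - s * s / a"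
      using insert.prems(2) unfolding psd_on_def by metis
    then show "0 \<le> (\<Sum>i\<in>F. \<Sum>j\<in>F. x i * M' i j * x j)" using Q by simp
  qed
  obtain b' where b': "\<forall>i\<in>F. \<forall>j\<in>F. (\<Sum>l\<in>F. b' i l * b' j l) = M' i j"
    using insert.IH[OF sym' psd'] by blast
  define b where "b i l = (if i = k then (if l = k then sqrt a else 0)
      else (if l = k then M i k / sqrt a else b' i l))" for i l
  have zk: "M j k = 0" if "a = 0" "j \<in> insert k F" for j
    using psd_zero_diag[of "insert k F" M k j] insert.hyps(1) insert.prems that by (simp add: a_def)
  show ?case
  proof (intro exI ballI)
    fix i j assume i: "i \<in> insert k F" and j: "j \<in> insert k F"
    have split: "(\<Sum>l\<in>insert k F. b i l * b j l) = b i k * b j k + (\<Sum>l\<in>F. b i l * b j l)"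
      using insert.hyps by simp
    have bF: "\<And>i l. i \<noteq> k \<Longrightarrow> l \<in> F \<Longrightarrow> b i l = b' i l" "\<And>l. l \<in> F \<Longrightarrow> b k l = 0"
      using insert.hyps by (auto simp: b_def)
    show "(\<Sum>l\<in>insert k F. b i l * b j l) = M i j"
    proof (cases "i = k")
      case ik: True
      show ?thesis
      proof (cases "j = k")
        case True then show ?thesis using ik split bF a0 by (simp add: b_def a_def)
      next
        case False
        then have jF: "j \<in> F" using j by auto
        have "(\<Sum>l\<in>insert k F. b i l * b j l) = sqrt a * (M j k / sqrt a)"
          using split bF ik False jF by (simp add: b_def)
        also have "\<dots> = M k j"
          using zk[of j] j a0 ik symM[of k j] by (cases "a = 0") auto
        finally show ?thesis using ik by simp
      qed
    next
      case iF: False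
      then have iF': "i \<in> F" using i by auto
      show ?thesis
      proof (cases "j = k")
        case True
        have "(\<Sum>l\<in>insert k F. b i l * b j l) = (M i k / sqrt a) * sqrt a"
          using split bF iF True by (simp add: b_def)
        also have "\<dots> = M i k"
          using zk[of i] i a0 by (cases "a = 0") auto
        finally show ?thesis using True by simp
      next
        case False
        then have jF: "j \<in> F" using j by auto
        have "(\<Sum>l\<in>insert k F. b i l * b j l) = (M i k / sqrt a) * (M j k / sqrt a) + M' i j"
          using split bF iF False b' iF' jF by (simp add: b_def)
        also have "\<dots> = M i j"
        proof (cases "a = 0")
          case True then show ?thesis by (simp add: M'_def)
        next
          case False
          then have sa: "sqrt a * sqrt a = a" using a0 by simp
          have "M k j = M j k" using symM i j by auto
          then show ?thesis using False sa by (simp add: M'_def)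
        qed
        finally show ?thesis .
      qed
    qed
  qed
qed

lemma contraction_vnorm:
  fixes A :: "real mat"
  assumes A: "A \<in> carrier_mat m m" and c: "contraction A" and x: "x \<in> carrier_vec m"
  shows "vnorm (A *\<^sub>v x) \<le> vnorm x"
proof (cases "vnorm x = 0")
  case True
  have "\<forall>i\<in>{..<dim_vec x}. norm (x $ i) = 0"
    using True unfolding vnorm_L2 by (subst L2_set_eq_0_iff[symmetric]) auto
  then have "x = 0\<^sub>v m" using x by (intro eq_vecI) auto
  then have "A *\<^sub>v x = 0\<^sub>v m" using A by (intro eq_vecI) (auto simp: scalar_prod_def)
  then show ?thesis using True by (simp add: vnorm_def)
next
  case False
  define c where "c = vnorm x"
  have cpos: "c > 0" using False vnorm_nonneg[of x] unfolding c_def by linarith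
  define y where "y = (1/c) \<cdot>\<^sub>v x"
  have y: "y \<in> carrier_vec (dim_col A)" using x A by (simp add: y_def)
  have vy: "vnorm y = 1" using cpos by (simp add: y_def vnorm_smult_vec c_def)
  have "vnorm (A *\<^sub>v y) \<le> opnorm A" by (rule opnorm_ge[OF y]) (simp add: vy)
  also have "\<dots> \<le> 1" using c by (simp add: contraction_def)
  finally have "vnorm (A *\<^sub>v y) \<le> 1" .
  moreover have "A *\<^sub>v y = (1/c) \<cdot>\<^sub>v (A *\<^sub>v x)"
    unfolding y_def by (rule mult_mat_vec[OF A x])
  ultimately have "vnorm (A *\<^sub>v x) / c \<le> 1" using cpos by (simp add: vnorm_smult_vec)
  then show ?thesis using cpos unfolding c_def by (simp add: divide_le_eq)
qed

lemma vnorm_sq_real: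
  fixes x :: "real vec"
  shows "(vnorm x)^2 = (\<Sum>i<dim_vec x. x$i * x$i)"
  unfolding vnorm_def by (simp add: sum_nonneg power2_eq_square)

lemma contraction_psd:
  fixes A :: "real mat"
  assumes A: "A \<in> carrier_mat m m" and c: "contraction A"
  shows "psd_on {..<m} (\<lambda>i j. (if i = j then 1 else 0) - (\<Sum>l<m. A $$ (l,i) * A $$ (l,j)))"
  unfolding psd_on_def
proof
  fix z :: "nat \<Rightarrow> real"
  define x where "x = vec m z"
  have x: "x \<in> carrier_vec m" by (simp add: x_def)
  have Ax: "(A *\<^sub>v x) $ l = (\<Sum>i<m. A $$ (l,i) * z i)" if "l < m" for l
    using that A by (subst mult_mat_vec_entry) (auto simp: x_def)
  have "(vnorm (A *\<^sub>v x))^2 \<le> (vnorm x)^2"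
    by (rule power_mono[OF contraction_vnorm[OF A c x] vnorm_nonneg])
  then have le: "(\<Sum>l<m. (A *\<^sub>v x) $ l * (A *\<^sub>v x) $ l) \<le> (\<Sum>i<m. z i * z i)"
    using A by (simp add: vnorm_sq_real x_def)
  have e1: "(\<Sum>i<m. \<Sum>j<m. z i * (if i = j then 1 else 0) * z j) = (\<Sum>i<m. z i * z i)"
  proof (intro sum.cong refl)
    fix i assume i: "i \<in> {..<m}"
    have "(\<Sum>j<m. z i * (if i = j then 1 else 0) * z j) = z i * (if i = i then 1 else 0) * z i"
      by (rule sum_one_support) (use i in auto)
    then show "(\<Sum>j<m. z i * (if i = j then 1 else 0) * z j) = z i * z i" by simp
  qed
  have e2: "(\<Sum>i<m. \<Sum>j<m. z i * (\<Sum>l<m. A $$ (l,i) * A $$ (l,j)) * z j) =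
      (\<Sum>l<m. (A *\<^sub>v x) $ l * (A *\<^sub>v x) $ l)"
  proof -
    have "(\<Sum>i<m. \<Sum>j<m. z i * (\<Sum>l<m. A $$ (l,i) * A $$ (l,j)) * z j) =
        (\<Sum>i<m. \<Sum>j<m. \<Sum>l<m. (A $$ (l,i) * z i) * (A $$ (l,j) * z j))"
    proof (intro sum.cong refl)
      fix i j
      have "z i * (\<Sum>l<m. A $$ (l,i) * A $$ (l,j)) * z j = (\<Sum>l<m. z i * (A $$ (l,i) * A $$ (l,j)) * z j)"
        by (simp add: sum_distrib_left sum_distrib_right)
      also have "\<dots> = (\<Sum>l<m. (A $$ (l,i) * z i) * (A $$ (l,j) * z j))"
        by (intro sum.cong refl) (simp add: mult_ac)
      finally show "z i * (\<Sum>l<m. A $$ (l,i) * A $$ (l,j)) * z j = (\<Sum>l<m. (A $$ (l,i) * z i) * (A $$ (l,j) * z j))" .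
    qed
    also have "\<dots> = (\<Sum>i<m. \<Sum>l<m. \<Sum>j<m. (A $$ (l,i) * z i) * (A $$ (l,j) * z j))"
      by (rule sum.cong[OF refl], rule sum.swap)
    also have "\<dots> = (\<Sum>l<m. \<Sum>i<m. \<Sum>j<m. (A $$ (l,i) * z i) * (A $$ (l,j) * z j))"
      by (rule sum.swap)
    also have "\<dots> = (\<Sum>l<m. (\<Sum>i<m. A $$ (l,i) * z i) * (\<Sum>j<m. A $$ (l,j) * z j))"
      by (simp add: sum_product)
    also have "\<dots> = (\<Sum>l<m. (A *\<^sub>v x) $ l * (A *\<^sub>v x) $ l)"
      by (intro sum.cong refl) (simp add: Ax)
    finally show ?thesis .
  qed
  have "(\<Sum>i\<in>{..<m}. \<Sum>j\<in>{..<m}. z i * ((if i = j then 1 else 0) - (\<Sum>l<m. A $$ (l,i) * A $$ (l,j))) * z j)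
      = (\<Sum>i<m. \<Sum>j<m. z i * (if i = j then 1 else 0) * z j) -
        (\<Sum>i<m. \<Sum>j<m. z i * (\<Sum>l<m. A $$ (l,i) * A $$ (l,j)) * z j)"
    unfolding sum_subtractf[symmetric] by (intro sum.cong refl) (simp add: right_diff_distrib left_diff_distrib)
  also have "\<dots> \<ge> 0" using e1 e2 le by simp
  finally show "0 \<le> (\<Sum>i\<in>{..<m}. \<Sum>j\<in>{..<m}. z i * ((if i = j then 1 else 0) - (\<Sum>l<m. A $$ (l,i) * A $$ (l,j))) * z j)" .
qed

lemma sum_split_add: fixes a b :: nat and f :: "nat \<Rightarrow> 'a::comm_monoid_add" shows "(\<Sum>p<a+b. f p) = (\<Sum>p<a. f p) + (\<Sum>l<b. f (a + l))"
  by (induction b) (auto simp: add.assoc)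

lemma isometry_unitary_blocks:
  fixes V :: "real mat"
  assumes V: "V \<in> carrier_mat n m" and VtV: "transpose_mat V * V = 1\<^sub>m m"
  defines "Q \<equiv> 1\<^sub>m n - V * transpose_mat V"
  defines "W \<equiv> four_block_mat V Q (0\<^sub>m m m) (transpose_mat V)"
  shows "W * transpose_mat W = 1\<^sub>m (n + m)" "transpose_mat W * W = 1\<^sub>m (m + n)"
    "W \<in> carrier_mat (n + m) (m + n)"
proof -
  have Vt: "transpose_mat V \<in> carrier_mat m n" using V by simp
  define P where "P = V * transpose_mat V"
  have P: "P \<in> carrier_mat n n" using V by (simp add: P_def)
  have Q: "Q \<in> carrier_mat n n" using P by (simp add: Q_def P_def[symmetric] minus_carrier_mat)
  have PV: "P * V = V"
    unfolding P_def using V Vt by (simp add: assoc_mult_mat[OF V Vt V] VtV)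
  have VtP: "transpose_mat V * P = transpose_mat V"
    unfolding P_def using V Vt
    by (simp add: assoc_mult_mat[OF Vt V Vt, symmetric] VtV)
  have PP: "P * P = P"
  proof -
    have "P * P = (V * transpose_mat V) * P" by (simp add: P_def)
    also have "\<dots> = V * (transpose_mat V * P)" by (rule assoc_mult_mat[OF V Vt P])
    also have "\<dots> = P" by (subst VtP) (simp add: P_def)
    finally show ?thesis .
  qed
  have Pt: "transpose_mat P = P" unfolding P_def using V by (simp add: transpose_mult[OF V Vt])
  have Qt: "transpose_mat Q = Q"
    unfolding Q_def P_def[symmetric] using transpose_minus[OF one_carrier_mat P] Pt by simp
  have QV: "Q * V = 0\<^sub>m n m"
    unfolding Q_def P_def[symmetric] using P V
    by (simp add: minus_mult_distrib_mat[OF _ P V] PV)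
  have VtQ: "transpose_mat V * Q = 0\<^sub>m m n"
    unfolding Q_def P_def[symmetric] using P V Vt
    by (simp add: mult_minus_distrib_mat[OF Vt _ P] VtP)
  have QP: "Q * P = 0\<^sub>m n n"
    unfolding Q_def P_def[symmetric] using P by (simp add: minus_mult_distrib_mat[OF one_carrier_mat P P] PP)
  have QQ: "Q * Q = Q"
  proof -
    have "Q * Q = Q * 1\<^sub>m n - Q * P"
      using mult_minus_distrib_mat[OF Q one_carrier_mat P] unfolding Q_def P_def[symmetric] .
    also have "\<dots> = Q" using QP Q by (auto intro!: eq_matI)
    finally show ?thesis .
  qed
  have PQ: "P + Q = 1\<^sub>m n" "Q + P = 1\<^sub>m n"
    unfolding Q_def P_def[symmetric] using P by (auto intro!: eq_matI)
  have tW: "transpose_mat W = four_block_mat (transpose_mat V) (0\<^sub>m m m) Q V"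
    unfolding W_def using V Vt Q by (subst transpose_four_block_mat) (auto simp: Qt)
  show "W \<in> carrier_mat (n + m) (m + n)" unfolding W_def using V Vt by simp
  have "W * transpose_mat W = four_block_mat (V * transpose_mat V + Q * Q) (V * 0\<^sub>m m m + Q * V)
      (0\<^sub>m m m * transpose_mat V + transpose_mat V * Q) (0\<^sub>m m m * 0\<^sub>m m m + transpose_mat V * V)"
    unfolding tW by (unfold W_def, rule mult_four_block_mat) (use V Vt Q in auto)
  also have "\<dots> = four_block_mat (1\<^sub>m n) (0\<^sub>m n m) (0\<^sub>m m n) (1\<^sub>m m)"
    using V Vt Q QQ QV VtQ VtV PQ by (simp add: P_def[symmetric])
  finally show "W * transpose_mat W = 1\<^sub>m (n + m)" by simp
  have "transpose_mat W * W = four_block_mat (transpose_mat V * V + 0\<^sub>m m m * 0\<^sub>m m m)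
      (transpose_mat V * Q + 0\<^sub>m m m * transpose_mat V) (Q * V + V * 0\<^sub>m m m) (Q * Q + V * transpose_mat V)"
    unfolding tW by (unfold W_def, rule mult_four_block_mat) (use V Vt Q in auto)
  also have "\<dots> = four_block_mat (1\<^sub>m m) (0\<^sub>m m n) (0\<^sub>m n m) (1\<^sub>m n)"
    using V Vt Q QQ QV VtQ VtV PQ by (simp add: P_def[symmetric])
  finally show "transpose_mat W * W = 1\<^sub>m (m + n)" by simp
qed

lemma dilation:
  fixes A :: "real mat"
  assumes A: "A \<in> carrier_mat m m" and c: "contraction A"
  shows "\<exists>W. W \<in> carrier_mat (3*m) (3*m) \<and> W * transpose_mat W = 1\<^sub>m (3*m) \<and>
     transpose_mat W * W = 1\<^sub>m (3*m) \<and> (\<forall>r<m. \<forall>s<m. W $$ (r,s) = A $$ (r,s))"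
proof -
  define N where "N i j = (if i = j then 1 else 0) - (\<Sum>l<m. A $$ (l,i) * A $$ (l,j))" for i j
  have sym: "\<forall>i\<in>{..<m}. \<forall>j\<in>{..<m}. N i j = N j i"
    unfolding N_def by (auto simp: mult.commute)
  have psd: "psd_on {..<m} N" using contraction_psd[OF A c] unfolding N_def .
  obtain b where b: "\<forall>i\<in>{..<m}. \<forall>j\<in>{..<m}. (\<Sum>l\<in>{..<m}. b i l * b j l) = N i j"
    using cholesky[OF _ sym psd] by blast
  define V where "V = mat (2*m) m (\<lambda>(p,j). if p < m then A $$ (p,j) else b j (p - m))"
  have V: "V \<in> carrier_mat (2*m) m" by (simp add: V_def)
  have VtV: "transpose_mat V * V = 1\<^sub>m m"
  proof (rule eq_matI)
    fix i j assume "i < dim_row (1\<^sub>m m :: real mat)" "j < dim_col (1\<^sub>m m :: real mat)"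
    then have i: "i < m" and j: "j < m" by auto
    have "(transpose_mat V * V) $$ (i,j) = (\<Sum>p<m+m. V $$ (p,i) * V $$ (p,j))"
      using V i j by (simp add: scalar_prod_def atLeast0LessThan mult_2)
    also have "\<dots> = (\<Sum>p<m. V $$ (p,i) * V $$ (p,j)) + (\<Sum>l<m. V $$ (m+l,i) * V $$ (m+l,j))"
      by (rule sum_split_add)
    also have "\<dots> = (\<Sum>p<m. A $$ (p,i) * A $$ (p,j)) + (\<Sum>l<m. b i l * b j l)"
      using i j by (simp add: V_def)
    also have "\<dots> = 1\<^sub>m m $$ (i,j)"
      using b i j by (simp add: N_def)
    finally show "(transpose_mat V * V) $$ (i,j) = 1\<^sub>m m $$ (i,j)" .
  qed (use V in auto)
  define W where "W = four_block_mat V (1\<^sub>m (2*m) - V * transpose_mat V) (0\<^sub>m m m) (transpose_mat V)"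
  note iso = isometry_unitary_blocks[OF V VtV, folded W_def]
  have e1: "2*m + m = 3*m" "m + 2*m = 3*m" by auto
  show ?thesis
  proof (intro exI conjI allI impI)
    show "W \<in> carrier_mat (3*m) (3*m)" using iso(3) unfolding e1 .
    show "W * transpose_mat W = 1\<^sub>m (3*m)" using iso(1) unfolding e1 .
    show "transpose_mat W * W = 1\<^sub>m (3*m)" using iso(2) unfolding e1 .
    fix r s assume "r < m" "s < m"
    then show "W $$ (r,s) = A $$ (r,s)" using V by (simp add: W_def V_def)
  qed
qed

definition embm :: "nat \<Rightarrow> nat \<Rightarrow> (nat \<Rightarrow> nat) \<Rightarrow> real mat \<Rightarrow> real mat" where
  "embm k d f W = mat k k (\<lambda>(r,s). if r \<in> f ` {..<d} \<and> s \<in> f ` {..<d}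
     then W $$ (the_inv_into {..<d} f r, the_inv_into {..<d} f s) else if r = s then 1 else 0)"

lemma embm_carrier: "embm k d f W \<in> carrier_mat k k"
  by (simp add: embm_def)

lemma embm_transpose:
  assumes "W \<in> carrier_mat d d" "inj_on f {..<d}"
  shows "transpose_mat (embm k d f W) = embm k d f (transpose_mat W)"
  by (rule eq_matI) (use assms in \<open>auto simp: embm_def the_inv_into_f_f\<close>)

lemma sum_one_support_gen:
  fixes f :: "nat \<Rightarrow> 'a::comm_monoid_add"
  assumes "finite I" "a \<in> I" "\<And>j. j \<in> I \<Longrightarrow> j \<noteq> a \<Longrightarrow> f j = 0"
  shows "sum f I = f a"
proof -
  have "sum f I = sum f {a}"
    by (rule sum.mono_neutral_right) (use assms in auto)
  then show ?thesis by simp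
qed

lemma embm_action:
  assumes inj: "inj_on f {..<d}" and img: "f ` {..<d} \<subseteq> {..<k}"
    and y: "y \<in> carrier_vec k" and r: "r < k"
  shows "(embm k d f W *\<^sub>v y) $ r = (if r \<in> f ` {..<d}
      then (\<Sum>p<d. W $$ (the_inv_into {..<d} f r, p) * y $ (f p)) else y $ r)"
proof -
  let ?I = "f ` {..<d}"
  let ?g = "the_inv_into {..<d} f"
  let ?U = "embm k d f W"
  have e: "(?U *\<^sub>v y) $ r = (\<Sum>q<k. ?U $$ (r,q) * y $ q)"
    using r y by (subst mult_mat_vec_entry) (auto simp: embm_def)
  show ?thesis
  proof (cases "r \<in> ?I")
    case True
    have "(\<Sum>q<k. ?U $$ (r,q) * y $ q) = (\<Sum>q\<in>?I. ?U $$ (r,q) * y $ q)"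
    proof (rule sum.mono_neutral_right)
      show "\<forall>q\<in>{..<k} - ?I. ?U $$ (r,q) * y $ q = 0"
        using True r by (auto simp: embm_def)
    qed (use img in auto)
    also have "\<dots> = (\<Sum>p<d. ?U $$ (r, f p) * y $ (f p))"
      by (rule sum.reindex[OF inj, unfolded comp_def])
    also have "\<dots> = (\<Sum>p<d. W $$ (?g r, p) * y $ (f p))"
    proof (intro sum.cong refl)
      fix p assume p: "p \<in> {..<d}"
      then have "f p < k" using img by auto
      then show "?U $$ (r, f p) * y $ (f p) = W $$ (?g r, p) * y $ (f p)"
        using True r p inj by (simp add: embm_def the_inv_into_f_f)
    qed
    finally show ?thesis using e True by simp
  next
    case False
    have "(\<Sum>q<k. ?U $$ (r,q) * y $ q) = ?U $$ (r,r) * y $ r"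
      by (rule sum_one_support_gen) (use False r in \<open>auto simp: embm_def\<close>)
    then show ?thesis using e False r by (simp add: embm_def)
  qed
qed

lemma embm_orth:
  assumes inj: "inj_on f {..<d}" and img: "f ` {..<d} \<subseteq> {..<k}"
    and W: "W \<in> carrier_mat d d" and WW: "W * transpose_mat W = 1\<^sub>m d"
  shows "embm k d f W * transpose_mat (embm k d f W) = 1\<^sub>m k"
proof (rule eq_matI)
  let ?I = "f ` {..<d}"
  let ?g = "the_inv_into {..<d} f"
  let ?U = "embm k d f W"
  fix r s assume "r < dim_row (1\<^sub>m k :: real mat)" "s < dim_col (1\<^sub>m k :: real mat)"
  then have r: "r < k" and s: "s < k" by auto
  have rowU: "row ?U s \<in> carrier_vec k" using row_carrier[of ?U s] by (simp add: embm_def)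
  have "(?U * transpose_mat ?U) $$ (r,s) = (?U *\<^sub>v row ?U s) $ r"
    using r s by (simp add: embm_def)
  also have "\<dots> = 1\<^sub>m k $$ (r,s)"
  proof (cases "r \<in> ?I")
    case rI: True
    have "(?U *\<^sub>v row ?U s) $ r = (\<Sum>p<d. W $$ (?g r, p) * row ?U s $ (f p))"
      using embm_action[OF inj img rowU r] rI by simp
    also have "\<dots> = 1\<^sub>m k $$ (r,s)"
    proof (cases "s \<in> ?I")
      case sI: True
      have gr: "?g r < d" and gs: "?g s < d"
        using rI sI inj by (auto simp: the_inv_into_f_f)
      have "(\<Sum>p<d. W $$ (?g r, p) * row ?U s $ (f p)) = (\<Sum>p<d. W $$ (?g r, p) * W $$ (?g s, p))"
      proof (intro sum.cong refl)
        fix p assume p: "p \<in> {..<d}"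
        then have "f p < k" using img by auto
        then show "W $$ (?g r, p) * row ?U s $ (f p) = W $$ (?g r, p) * W $$ (?g s, p)"
          using sI s p inj by (simp add: embm_def the_inv_into_f_f)
      qed
      also have "\<dots> = (W * transpose_mat W) $$ (?g r, ?g s)"
        using gr gs W by (simp add: scalar_prod_def atLeast0LessThan)
      also have "\<dots> = (if ?g r = ?g s then 1 else 0)" using WW gr gs by simp
      also have "\<dots> = 1\<^sub>m k $$ (r,s)"
      proof -
        have "(?g r = ?g s) = (r = s)"
          using rI sI inj by (metis f_the_inv_into_f)
        then show ?thesis using r s by simp
      qed
      finally show ?thesis .
    next
      case sI: False
      have "(\<Sum>p<d. W $$ (?g r, p) * row ?U s $ (f p)) = 0"
      proof (intro sum.neutral ballI)
        fix p assume p: "p \<in> {..<d}"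
        then have "f p < k" "f p \<noteq> s" using img sI by auto
        then show "W $$ (?g r, p) * row ?U s $ (f p) = 0" using s sI by (simp add: embm_def)
      qed
      moreover have "r \<noteq> s" using rI sI by auto
      ultimately show ?thesis using r s by simp
    qed
    finally show ?thesis .
  next
    case rI: False
    have "(?U *\<^sub>v row ?U s) $ r = row ?U s $ r"
      using embm_action[OF inj img rowU r] rI by simp
    also have "\<dots> = 1\<^sub>m k $$ (r,s)" using r s rI by (auto simp: embm_def)
    finally show ?thesis .
  qed
  finally show "(?U * transpose_mat ?U) $$ (r,s) = 1\<^sub>m k $$ (r,s)" .
qed (auto simp: embm_def)

lemma foldr_mult_carrier:
  "(\<And>M. M \<in> set Ms \<Longrightarrow> M \<in> carrier_mat k k) \<Longrightarrow> foldr (*) Ms (1\<^sub>m k) \<in> carrier_mat k k"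
  by (induction Ms) (auto intro!: mult_carrier_mat[of _ k k])

lemma chain:
  fixes U B :: "nat \<Rightarrow> real mat" and G :: "nat \<Rightarrow> nat set"
  assumes U: "\<And>j. j \<in> set js \<Longrightarrow> U j \<in> carrier_mat k k"
    and B: "\<And>j. j \<in> set js \<Longrightarrow> B j \<in> carrier_mat m m"
    and Gk: "\<And>j. j \<in> set js \<Longrightarrow> G j \<subseteq> {..<k}"
    and Gm: "\<And>j. j \<in> set js \<Longrightarrow> G j \<inter> {..<m} = {}"
    and Gd: "\<And>i j. i \<in> set js \<Longrightarrow> j \<in> set js \<Longrightarrow> i \<noteq> j \<Longrightarrow> G i \<inter> G j = {}"
    and act: "\<And>j y. j \<in> set js \<Longrightarrow> y \<in> carrier_vec k \<Longrightarrow> (\<forall>r\<in>G j. y$r = 0) \<Longrightarrow>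
        (\<forall>r<m. (U j *\<^sub>v y)$r = (B j *\<^sub>v vec m (\<lambda>p. y$p))$r) \<and>
        (\<forall>r<k. r \<notin> {..<m} \<union> G j \<longrightarrow> (U j *\<^sub>v y)$r = y$r)"
    and dist: "distinct js"
    and y: "y \<in> carrier_vec k" and y0: "\<forall>j\<in>set js. \<forall>r\<in>G j. y$r = 0"
  shows "(\<forall>r<m. (foldr (*) (map U js) (1\<^sub>m k) *\<^sub>v y)$r =
            (foldr (*) (map B js) (1\<^sub>m m) *\<^sub>v vec m (\<lambda>p. y$p))$r) \<and>
         (\<forall>r<k. r \<notin> {..<m} \<union> (\<Union>j\<in>set js. G j) \<longrightarrow> (foldr (*) (map U js) (1\<^sub>m k) *\<^sub>v y)$r = y$r)"
  using assms
proof (induction js)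
  case Nil
  have "vec m (\<lambda>p. y$p) \<in> carrier_vec m" by simp
  then show ?case using Nil.prems(8) by auto
next
  case (Cons j js)
  let ?PU = "foldr (*) (map U js) (1\<^sub>m k)"
  let ?PB = "foldr (*) (map B js) (1\<^sub>m m)"
  have PU: "?PU \<in> carrier_mat k k" by (rule foldr_mult_carrier) (use Cons.prems(1) in auto)
  have PB: "?PB \<in> carrier_mat m m" by (rule foldr_mult_carrier) (use Cons.prems(2) in auto)
  have IH: "(\<forall>r<m. (?PU *\<^sub>v y)$r = (?PB *\<^sub>v vec m (\<lambda>p. y$p))$r) \<and>
         (\<forall>r<k. r \<notin> {..<m} \<union> (\<Union>j\<in>set js. G j) \<longrightarrow> (?PU *\<^sub>v y)$r = y$r)"
    by (rule Cons.IH) (use Cons.prems in auto)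
  define z where "z = ?PU *\<^sub>v y"
  have z: "z \<in> carrier_vec k" using PU Cons.prems(8) by (simp add: z_def)
  have jn: "j \<notin> set js" using Cons.prems(7) by simp
  have z0: "\<forall>r\<in>G j. z$r = 0"
  proof
    fix r assume r: "r \<in> G j"
    have rk: "r < k" using Cons.prems(3)[of j] r by auto
    have "r \<notin> {..<m}" using Cons.prems(4)[of j] r by auto
    moreover have "r \<notin> (\<Union>j\<in>set js. G j)"
      using Cons.prems(5)[of j] r jn by fastforce
    ultimately have "z$r = y$r" using IH rk by (auto simp: z_def)
    then show "z$r = 0" using Cons.prems(9) r by simp
  qed
  have Uj: "U j \<in> carrier_mat k k" and Bj: "B j \<in> carrier_mat m m"
    using Cons.prems(1,2) by auto
  have actj: "(\<forall>r<m. (U j *\<^sub>v z)$r = (B j *\<^sub>v vec m (\<lambda>p. z$p))$r) \<and>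
        (\<forall>r<k. r \<notin> {..<m} \<union> G j \<longrightarrow> (U j *\<^sub>v z)$r = z$r)"
    using Cons.prems(6)[of j z] z z0 by simp
  have eq: "foldr (*) (map U (j#js)) (1\<^sub>m k) *\<^sub>v y = U j *\<^sub>v z"
    using assoc_mult_mat_vec[OF Uj PU Cons.prems(8)] by (simp add: z_def)
  have core: "vec m (\<lambda>p. z$p) = ?PB *\<^sub>v vec m (\<lambda>p. y$p)"
    using IH PB by (intro eq_vecI) (auto simp: z_def)
  have eqB: "foldr (*) (map B (j#js)) (1\<^sub>m m) *\<^sub>v vec m (\<lambda>p. y$p) = B j *\<^sub>v vec m (\<lambda>p. z$p)"
    unfolding core using assoc_mult_mat_vec[OF Bj PB, of "vec m (\<lambda>p. y$p)"] by simp
  show ?case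
  proof (intro conjI allI impI)
    fix r assume "r < m"
    then show "(foldr (*) (map U (j#js)) (1\<^sub>m k) *\<^sub>v y)$r =
        (foldr (*) (map B (j#js)) (1\<^sub>m m) *\<^sub>v vec m (\<lambda>p. y$p))$r"
      unfolding eq eqB using actj by simp
  next
    fix r assume "r < k" "r \<notin> {..<m} \<union> (\<Union>j\<in>set (j#js). G j)"
    then show "(foldr (*) (map U (j#js)) (1\<^sub>m k) *\<^sub>v y)$r = y$r"
      unfolding eq using actj IH by (simp add: z_def)
  qed
qed

definition slotf :: "nat \<Rightarrow> nat \<Rightarrow> nat \<Rightarrow> nat" where
  "slotf m l p = (if p < m then p else p + 2*m*l)"

lemma slotf_inj: "inj_on (slotf m l) {..<d}"
  by (auto simp: inj_on_def slotf_def split: if_splits)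

lemma slotf_img:
  assumes "l < t"
  shows "slotf m l ` {..<3*m} \<subseteq> {..<m + 2*m*t}"
proof
  fix r assume "r \<in> slotf m l ` {..<3*m}"
  then obtain p where p: "p < 3*m" "r = slotf m l p" by auto
  have "2*m*l + 2*m \<le> 2*m*t" using assms
    by (metis add.commute mult_Suc_right mult_le_mono2 Suc_leI)
  then show "r \<in> {..<m + 2*m*t}" using p by (auto simp: slotf_def)
qed

lemma slotf_img_char:
  "r \<in> slotf m l ` {..<3*m} \<Longrightarrow> r < m \<or> r \<in> {m + 2*m*l..<3*m + 2*m*l}"
  by (auto simp: slotf_def split: if_splits)

lemma slot_action:
  fixes W A :: "real mat"
  assumes lt: "l < t" and W: "W \<in> carrier_mat (3*m) (3*m)" and A: "A \<in> carrier_mat m m"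
    and corner: "\<forall>r<m. \<forall>s<m. W $$ (r,s) = A $$ (r,s)"
    and y: "y \<in> carrier_vec (m + 2*m*t)" and y0: "\<forall>r\<in>{m + 2*m*l..<3*m + 2*m*l}. y$r = 0"
  shows "(\<forall>r<m. (embm (m + 2*m*t) (3*m) (slotf m l) W *\<^sub>v y)$r = (A *\<^sub>v vec m (\<lambda>p. y$p))$r) \<and>
    (\<forall>r<m + 2*m*t. r \<notin> {..<m} \<union> {m + 2*m*l..<3*m + 2*m*l} \<longrightarrow>
       (embm (m + 2*m*t) (3*m) (slotf m l) W *\<^sub>v y)$r = y$r)"
proof (intro conjI allI impI)
  let ?k = "m + 2*m*t"
  let ?f = "slotf m l"
  note act = embm_action[OF slotf_inj slotf_img[OF lt] y]
  fix r assume r: "r < m"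
  have rk: "r < ?k" using r by simp
  have rI: "r \<in> ?f ` {..<3*m}"
    using r by (auto simp: slotf_def image_iff intro!: bexI[of _ r])
  have gr: "the_inv_into {..<3*m} ?f r = r"
    using r by (intro the_inv_into_f_eq[OF slotf_inj]) (auto simp: slotf_def)
  have "(embm ?k (3*m) ?f W *\<^sub>v y)$r = (\<Sum>p<3*m. W $$ (r, p) * y $ (?f p))"
    using act[OF rk] rI gr by simp
  also have "\<dots> = (\<Sum>p<m + 2*m. W $$ (r, p) * y $ (?f p))" by simp
  also have "\<dots> = (\<Sum>p<m. W $$ (r, p) * y $ (?f p)) + (\<Sum>q<2*m. W $$ (r, m+q) * y $ (?f (m+q)))"
    by (rule sum_split_add)
  also have "(\<Sum>q<2*m. W $$ (r, m+q) * y $ (?f (m+q))) = 0"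
  proof (intro sum.neutral ballI)
    fix q assume "q \<in> {..<2*m}"
    then have "?f (m+q) \<in> {m + 2*m*l..<3*m + 2*m*l}" by (auto simp: slotf_def)
    then show "W $$ (r, m+q) * y $ (?f (m+q)) = 0" using y0 by simp
  qed
  also have "(\<Sum>p<m. W $$ (r, p) * y $ (?f p)) = (A *\<^sub>v vec m (\<lambda>p. y$p))$r"
    using r A corner by (subst mult_mat_vec_entry) (auto simp: slotf_def)
  finally show "(embm ?k (3*m) ?f W *\<^sub>v y)$r = (A *\<^sub>v vec m (\<lambda>p. y$p))$r" by simp
next
  let ?k = "m + 2*m*t"
  let ?f = "slotf m l"
  note act = embm_action[OF slotf_inj slotf_img[OF lt] y]
  fix r assume r: "r < ?k" and rn: "r \<notin> {..<m} \<union> {m + 2*m*l..<3*m + 2*m*l}"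
  have "r \<notin> ?f ` {..<3*m}" using rn slotf_img_char by blast
  then show "(embm ?k (3*m) ?f W *\<^sub>v y)$r = y$r" using act[OF r] by simp
qed

lemma index_tuples_nth: "is \<in> index_tuples n t \<Longrightarrow> j < t \<Longrightarrow> is ! j < n"
  unfolding index_tuples_def using nth_mem by fastforce

lemma compress:
  fixes A Wf :: "nat \<Rightarrow> real mat"
  assumes A: "\<And>i. i < n \<Longrightarrow> A i \<in> carrier_mat m m"
    and Wf: "\<And>i. i < n \<Longrightarrow> Wf i \<in> carrier_mat (3*m) (3*m)"
    and corner: "\<And>i. i < n \<Longrightarrow> \<forall>r<m. \<forall>s<m. Wf i $$ (r,s) = A i $$ (r,s)"
    and isin: "is \<in> index_tuples n t" and x: "x \<in> carrier_vec m" and r: "r < m"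
  shows "(prod_mats (m + 2*m*t) (map (\<lambda>j. embm (m + 2*m*t) (3*m) (slotf m j) (Wf (is!j))) [0..<t])
      *\<^sub>v vec (m + 2*m*t) (\<lambda>r. if r < m then x$r else 0)) $ r =
    (prod_mats m (map (\<lambda>j. A (is!j)) [0..<t]) *\<^sub>v x) $ r"
proof -
  let ?k = "m + 2*m*t"
  let ?U = "\<lambda>j. embm ?k (3*m) (slotf m j) (Wf (is!j))"
  let ?B = "\<lambda>j. A (is!j)"
  let ?G = "\<lambda>j. {m + 2*m*j..<3*m + 2*m*j}"
  let ?y = "vec ?k (\<lambda>r. if r < m then x$r else 0)"
  have nth: "\<And>j. j \<in> set [0..<t] \<Longrightarrow> is ! j < n" using index_tuples_nth[OF isin] by auto
  have res: "(\<forall>r<m. (foldr (*) (map ?U [0..<t]) (1\<^sub>m ?k) *\<^sub>v ?y)$r =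
            (foldr (*) (map ?B [0..<t]) (1\<^sub>m m) *\<^sub>v vec m (\<lambda>p. ?y$p))$r) \<and>
         (\<forall>r<?k. r \<notin> {..<m} \<union> (\<Union>j\<in>set [0..<t]. ?G j) \<longrightarrow> (foldr (*) (map ?U [0..<t]) (1\<^sub>m ?k) *\<^sub>v ?y)$r = ?y$r)"
  proof (rule chain)
    show "\<And>j. j \<in> set [0..<t] \<Longrightarrow> ?U j \<in> carrier_mat ?k ?k" by (rule embm_carrier)
    show "\<And>j. j \<in> set [0..<t] \<Longrightarrow> ?B j \<in> carrier_mat m m" using A nth by blast
    show "\<And>j. j \<in> set [0..<t] \<Longrightarrow> ?G j \<subseteq> {..<?k}"
    proof -
      fix j assume "j \<in> set [0..<t]"
      then have "2*m*j + 2*m \<le> 2*m*t"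
        by (metis atLeastLessThan_iff set_upt add.commute mult_Suc_right mult_le_mono2 Suc_leI)
      then show "?G j \<subseteq> {..<?k}" by auto
    qed
    show "\<And>j. j \<in> set [0..<t] \<Longrightarrow> ?G j \<inter> {..<m} = {}" by auto
    show "\<And>i j. i \<in> set [0..<t] \<Longrightarrow> j \<in> set [0..<t] \<Longrightarrow> i \<noteq> j \<Longrightarrow> ?G i \<inter> ?G j = {}"
    proof -
      fix i j :: nat assume "i \<noteq> j"
      then have "i < j \<or> j < i" by arith
      then show "?G i \<inter> ?G j = {}"
      proof
        assume "i < j"
        then have "2*m*i + 2*m \<le> 2*m*j"
          by (metis add.commute mult_Suc_right mult_le_mono2 Suc_leI)
        then show ?thesis by auto
      next
        assume "j < i"
        then have "2*m*j + 2*m \<le> 2*m*i"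
          by (metis add.commute mult_Suc_right mult_le_mono2 Suc_leI)
        then show ?thesis by auto
      qed
    qed
    show "\<And>j (y :: real vec). j \<in> set [0..<t] \<Longrightarrow> y \<in> carrier_vec ?k \<Longrightarrow> (\<forall>r\<in>?G j. y$r = 0) \<Longrightarrow>
        (\<forall>r<m. (?U j *\<^sub>v y)$r = (?B j *\<^sub>v vec m (\<lambda>p. y$p))$r) \<and>
        (\<forall>r<?k. r \<notin> {..<m} \<union> ?G j \<longrightarrow> (?U j *\<^sub>v y)$r = y$r)"
    proof -
      fix j and y :: "real vec" assume j: "j \<in> set [0..<t]" and y: "y \<in> carrier_vec ?k" and y0: "\<forall>r\<in>?G j. y$r = 0"
      show "(\<forall>r<m. (?U j *\<^sub>v y)$r = (?B j *\<^sub>v vec m (\<lambda>p. y$p))$r) \<and>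
        (\<forall>r<?k. r \<notin> {..<m} \<union> ?G j \<longrightarrow> (?U j *\<^sub>v y)$r = y$r)"
        by (rule slot_action) (use j y y0 nth Wf A corner in auto)
    qed
    show "distinct [0..<t]" by simp
    show "?y \<in> carrier_vec ?k" by simp
    show "\<forall>j\<in>set [0..<t]. \<forall>r\<in>?G j. ?y$r = 0"
    proof (intro ballI)
      fix j r assume j: "j \<in> set [0..<t]" and r: "r \<in> ?G j"
      from j have "2*m*j + 2*m \<le> 2*m*t"
        by (metis atLeastLessThan_iff set_upt add.commute mult_Suc_right mult_le_mono2 Suc_leI)
      then have "r < ?k" using r by auto
      then show "?y$r = 0" using r by auto
    qed
  qed
  have xv: "vec m (\<lambda>p. ?y$p) = x" using x by (intro eq_vecI) auto
  show ?thesis using res r unfolding prod_mats_def xv by simp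
qed

lemma finite_index_tuples: "finite (index_tuples n t)"
proof -
  have "index_tuples n t = {xs. set xs \<subseteq> {..<n} \<and> length xs = t}" by (auto simp: index_tuples_def)
  then show ?thesis using finite_lists_length_eq[of "{..<n}" t] by simp
qed

lemma prod_mats_carrier:
  "(\<And>M. M \<in> set Ms \<Longrightarrow> M \<in> carrier_mat k k) \<Longrightarrow> prod_mats k Ms \<in> carrier_mat k k"
  unfolding prod_mats_def by (induction Ms) (auto intro!: mult_carrier_mat[of _ k k])

lemma prod_mats_tuple_carrier:
  assumes "\<forall>j<t. \<forall>i<n. M j i \<in> carrier_mat k k" "is \<in> index_tuples n t"
  shows "prod_mats k (map (\<lambda>j. M j (is!j)) [0..<t]) \<in> carrier_mat k k"
  by (rule prod_mats_carrier) (use assms index_tuples_nth in auto)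

lemma te_entry:
  fixes T :: "nat list \<Rightarrow> 'a::comm_ring_1"
  assumes M: "\<forall>j<t. \<forall>i<n. M j i \<in> carrier_mat k k" and x: "x \<in> carrier_vec k" and r: "r < k"
  shows "(tensor_eval n t k T M *\<^sub>v x) $ r =
    (\<Sum>is\<in>index_tuples n t. T is * (prod_mats k (map (\<lambda>j. M j (is!j)) [0..<t]) *\<^sub>v x) $ r)"
proof -
  let ?P = "\<lambda>is. prod_mats k (map (\<lambda>j. M j (is!j)) [0..<t])"
  have P: "\<And>is. is \<in> index_tuples n t \<Longrightarrow> ?P is \<in> carrier_mat k k"
    by (rule prod_mats_tuple_carrier[OF M])
  have "(tensor_eval n t k T M *\<^sub>v x) $ r = (\<Sum>s<k. tensor_eval n t k T M $$ (r,s) * x $ s)"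
    using r x by (subst mult_mat_vec_entry) (auto simp: tensor_eval_def)
  also have "\<dots> = (\<Sum>s<k. \<Sum>is\<in>index_tuples n t. T is * ?P is $$ (r,s) * x $ s)"
    using r by (simp add: tensor_eval_def sum_distrib_right)
  also have "\<dots> = (\<Sum>is\<in>index_tuples n t. \<Sum>s<k. T is * ?P is $$ (r,s) * x $ s)"
    by (rule sum.swap)
  also have "\<dots> = (\<Sum>is\<in>index_tuples n t. T is * (?P is *\<^sub>v x) $ r)"
  proof (intro sum.cong refl)
    fix xs assume "xs \<in> index_tuples n t"
    then have Px: "?P xs \<in> carrier_mat k k" by (rule P)
    then have "(?P xs *\<^sub>v x) $ r = (\<Sum>s<k. ?P xs $$ (r,s) * x $ s)"
      using r x by (subst mult_mat_vec_entry) auto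
    then show "(\<Sum>s<k. T xs * ?P xs $$ (r,s) * x $ s) = T xs * (?P xs *\<^sub>v x) $ r"
      by (simp add: sum_distrib_left mult.assoc)
  qed
  finally show ?thesis .
qed

abbreviation cmat :: "real mat \<Rightarrow> complex mat" where "cmat R \<equiv> map_mat complex_of_real R"
abbreviation cvec :: "real vec \<Rightarrow> complex vec" where "cvec v \<equiv> map_vec complex_of_real v"

lemma cmat_mult:
  assumes "A \<in> carrier_mat nr n" "B \<in> carrier_mat n nc"
  shows "cmat (A * B) = cmat A * cmat B"
  using assms by (intro eq_matI) (auto simp: scalar_prod_def)

lemma cmat_one: "cmat (1\<^sub>m k) = 1\<^sub>m k"
  by (intro eq_matI) auto

lemma cmat_prod_mats:
  "(\<And>M. M \<in> set Ms \<Longrightarrow> M \<in> carrier_mat k k) \<Longrightarrow> prod_mats k (map cmat Ms) = cmat (prod_mats k Ms)"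
proof (induction Ms)
  case Nil then show ?case by (simp add: prod_mats_def cmat_one)
next
  case (Cons M Ms)
  have "prod_mats k Ms \<in> carrier_mat k k" using Cons.prems by (intro prod_mats_carrier) auto
  then show ?case using Cons by (simp add: prod_mats_def cmat_mult[of _ k k _ k])
qed

lemma cmat_tensor_eval:
  assumes U: "\<forall>j<t. \<forall>i<n. U j i \<in> carrier_mat k k"
  shows "tensor_eval n t k (\<lambda>is. complex_of_real (S is)) (\<lambda>j i. cmat (U j i)) = cmat (tensor_eval n t k S U)"
proof (intro eq_matI)
  fix r s assume rs: "r < dim_row (cmat (tensor_eval n t k S U))" "s < dim_col (cmat (tensor_eval n t k S U))"
  then have r: "r < k" and s: "s < k" by (auto simp: tensor_eval_def)
  have eq: "prod_mats k (map (\<lambda>j. cmat (U j (is!j))) [0..<t]) = cmat (prod_mats k (map (\<lambda>j. U j (is!j)) [0..<t]))"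
    if "is \<in> index_tuples n t" for "is"
  proof -
    have m1: "map (\<lambda>j. cmat (U j (is!j))) [0..<t] = map cmat (map (\<lambda>j. U j (is!j)) [0..<t])" by simp
    have h: "prod_mats k (map cmat (map (\<lambda>j. U j (is!j)) [0..<t])) = cmat (prod_mats k (map (\<lambda>j. U j (is!j)) [0..<t]))"
      by (rule cmat_prod_mats) (use U that index_tuples_nth in auto)
    show ?thesis by (subst m1) (rule h)
  qed
  have P: "prod_mats k (map (\<lambda>j. U j (is!j)) [0..<t]) \<in> carrier_mat k k" if "is \<in> index_tuples n t" for "is"
    by (rule prod_mats_tuple_carrier[OF U that])
  show "tensor_eval n t k (\<lambda>is. complex_of_real (S is)) (\<lambda>j i. cmat (U j i)) $$ (r,s) = cmat (tensor_eval n t k S U) $$ (r,s)"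
  proof -
    have "tensor_eval n t k (\<lambda>is. complex_of_real (S is)) (\<lambda>j i. cmat (U j i)) $$ (r,s) =
       (\<Sum>is\<in>index_tuples n t. complex_of_real (S is) * prod_mats k (map (\<lambda>j. cmat (U j (is!j))) [0..<t]) $$ (r,s))"
      using r s by (simp add: tensor_eval_def)
    also have "\<dots> = (\<Sum>is\<in>index_tuples n t. complex_of_real (S is * prod_mats k (map (\<lambda>j. U j (is!j)) [0..<t]) $$ (r,s)))"
    proof (rule sum.cong[OF refl])
      fix xs assume xs: "xs \<in> index_tuples n t"
      have "prod_mats k (map (\<lambda>j. U j (xs!j)) [0..<t]) \<in> carrier_mat k k" by (rule P[OF xs])
      then show "complex_of_real (S xs) * prod_mats k (map (\<lambda>j. cmat (U j (xs!j))) [0..<t]) $$ (r,s) =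
          complex_of_real (S xs * prod_mats k (map (\<lambda>j. U j (xs!j)) [0..<t]) $$ (r,s))"
        using eq[OF xs] r s by simp
    qed
    also have "\<dots> = cmat (tensor_eval n t k S U) $$ (r,s)"
      using r s by (simp add: tensor_eval_def)
    finally show ?thesis .
  qed
qed (auto simp: tensor_eval_def)

lemma cmat_mult_vec:
  assumes "v \<in> carrier_vec (dim_col R)"
  shows "cmat R *\<^sub>v cvec v = cvec (R *\<^sub>v v)"
  using assms by (intro eq_vecI) (auto simp: scalar_prod_def)

lemma vnorm_cvec: "vnorm (cvec v) = vnorm v"
  by (simp add: vnorm_def)

lemma adjoint_cmat: "adjoint (cmat R) = cmat (transpose_mat R)"
  by (intro eq_matI) (auto simp: adjoint_def)

lemma unitary_cmat:
  assumes R: "R \<in> carrier_mat k k" and "R * transpose_mat R = 1\<^sub>m k" "transpose_mat R * R = 1\<^sub>m k"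
  shows "unitary k (cmat R)"
proof -
  have Rt: "transpose_mat R \<in> carrier_mat k k" using R by simp
  show ?thesis unfolding unitary_def adjoint_cmat
    using R assms(2,3) by (simp add: cmat_mult[OF R Rt, symmetric] cmat_mult[OF Rt R, symmetric] cmat_one)
qed

lemma unitary_vnorm:
  assumes U: "unitary k U" and x: "x \<in> carrier_vec k"
  shows "vnorm (U *\<^sub>v x) = vnorm x"
proof -
  have Uc: "U \<in> carrier_mat k k" using U by (simp add: unitary_def)
  have UU: "adjoint U * U = 1\<^sub>m k" using U by (simp add: unitary_def)
  have Ux: "(U *\<^sub>v x) $ r = (\<Sum>s<k. U $$ (r,s) * x $ s)" if "r < k" for r
    using that Uc x by (subst mult_mat_vec_entry) auto
  have adj: "(\<Sum>r<k. cnj (U $$ (r,s')) * U $$ (r,s)) = (if s' = s then 1 else 0)" if "s < k" "s' < k" for s s'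
  proof -
    have "(adjoint U * U) $$ (s', s) = (\<Sum>r<k. cnj (U $$ (r,s')) * U $$ (r,s))"
      using that Uc by (simp add: adjoint_def scalar_prod_def atLeast0LessThan)
    then show ?thesis using UU that by simp
  qed
  have "complex_of_real (\<Sum>r<k. (norm ((U *\<^sub>v x) $ r))^2) = (\<Sum>r<k. (U *\<^sub>v x) $ r * cnj ((U *\<^sub>v x) $ r))"
    by (simp only: of_real_sum complex_norm_square)
  also have "\<dots> = (\<Sum>r<k. \<Sum>s<k. \<Sum>s'<k. (x $ s * cnj (x $ s')) * (cnj (U $$ (r,s')) * U $$ (r,s)))"
  proof (intro sum.cong refl)
    fix r assume "r \<in> {..<k}"
    then have "(U *\<^sub>v x) $ r * cnj ((U *\<^sub>v x) $ r) = (\<Sum>s<k. U $$ (r,s) * x $ s) * (\<Sum>s'<k. cnj (U $$ (r,s')) * cnj (x $ s'))"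
      by (simp add: Ux)
    also have "\<dots> = (\<Sum>s<k. \<Sum>s'<k. (U $$ (r,s) * x $ s) * (cnj (U $$ (r,s')) * cnj (x $ s')))"
      by (rule sum_product)
    also have "\<dots> = (\<Sum>s<k. \<Sum>s'<k. (x $ s * cnj (x $ s')) * (cnj (U $$ (r,s')) * U $$ (r,s)))"
      by (intro sum.cong refl) (simp add: mult_ac)
    finally show "(U *\<^sub>v x) $ r * cnj ((U *\<^sub>v x) $ r) = (\<Sum>s<k. \<Sum>s'<k. (x $ s * cnj (x $ s')) * (cnj (U $$ (r,s')) * U $$ (r,s)))" .
  qed
  also have "\<dots> = (\<Sum>s<k. \<Sum>r<k. \<Sum>s'<k. (x $ s * cnj (x $ s')) * (cnj (U $$ (r,s')) * U $$ (r,s)))"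
    by (rule sum.swap)
  also have "\<dots> = (\<Sum>s<k. \<Sum>s'<k. \<Sum>r<k. (x $ s * cnj (x $ s')) * (cnj (U $$ (r,s')) * U $$ (r,s)))"
    by (rule sum.cong[OF refl], rule sum.swap)
  also have "\<dots> = (\<Sum>s<k. \<Sum>s'<k. (x $ s * cnj (x $ s')) * (if s' = s then 1 else 0))"
  proof (rule sum.cong[OF refl], rule sum.cong[OF refl])
    fix s s' assume "s \<in> {..<k}" "s' \<in> {..<k}"
    then show "(\<Sum>r<k. (x $ s * cnj (x $ s')) * (cnj (U $$ (r,s')) * U $$ (r,s))) =
        (x $ s * cnj (x $ s')) * (if s' = s then 1 else 0)"
      by (simp add: adj flip: sum_distrib_left)
  qed
  also have "\<dots> = (\<Sum>s<k. x $ s * cnj (x $ s))"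
  proof (rule sum.cong[OF refl])
    fix s assume s: "s \<in> {..<k}"
    have "(\<Sum>s'<k. (x $ s * cnj (x $ s')) * (if s' = s then 1 else 0)) = (x $ s * cnj (x $ s)) * (if s = s then 1 else 0)"
      by (rule sum_one_support_gen) (use s in auto)
    then show "(\<Sum>s'<k. (x $ s * cnj (x $ s')) * (if s' = s then 1 else 0)) = x $ s * cnj (x $ s)" by simp
  qed
  also have "\<dots> = complex_of_real (\<Sum>s<k. (norm (x $ s))^2)"
    by (simp only: of_real_sum complex_norm_square)
  finally have "(\<Sum>r<k. (norm ((U *\<^sub>v x) $ r))^2) = (\<Sum>s<k. (norm (x $ s))^2)"
    using of_real_eq_iff by blast
  then show ?thesis using Uc x by (simp add: vnorm_def)
qed

lemma unitary_prod_vnorm: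
  "(\<And>U. U \<in> set Us \<Longrightarrow> unitary k U) \<Longrightarrow> x \<in> carrier_vec k \<Longrightarrow> vnorm (prod_mats k Us *\<^sub>v x) = vnorm x"
proof (induction Us)
  case Nil then show ?case by (simp add: prod_mats_def)
next
  case (Cons U Us)
  have Uc: "U \<in> carrier_mat k k" using Cons.prems(1) by (simp add: unitary_def)
  have P: "prod_mats k Us \<in> carrier_mat k k"
    using Cons.prems(1) by (intro prod_mats_carrier) (auto simp: unitary_def)
  have "prod_mats k (U # Us) *\<^sub>v x = U *\<^sub>v (prod_mats k Us *\<^sub>v x)"
    using assoc_mult_mat_vec[OF Uc P Cons.prems(2)] by (simp add: prod_mats_def)
  also have "vnorm \<dots> = vnorm (prod_mats k Us *\<^sub>v x)"
    using Cons.prems P by (intro unitary_vnorm) auto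
  also have "\<dots> = vnorm x" using Cons by simp
  finally show ?case .
qed

lemma te_opnorm_bound:
  fixes T :: "nat list \<Rightarrow> real"
  assumes U: "\<forall>j<t. \<forall>i<n. unitary k (U j i)"
  shows "opnorm (tensor_eval n t k (\<lambda>is. complex_of_real (T is)) U) \<le> (\<Sum>is\<in>index_tuples n t. \<bar>T is\<bar>)"
proof (rule opnorm_le)
  let ?Z = "tensor_eval n t k (\<lambda>is. complex_of_real (T is)) U"
  let ?P = "\<lambda>is. prod_mats k (map (\<lambda>j. U j (is!j)) [0..<t])"
  have Uc: "\<forall>j<t. \<forall>i<n. U j i \<in> carrier_mat k k" using U by (simp add: unitary_def)
  fix x :: "complex vec" assume x: "x \<in> carrier_vec (dim_col ?Z)" and x1: "vnorm x \<le> 1"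
  have xk: "x \<in> carrier_vec k" using x by (simp add: tensor_eval_def)
  have Zx: "?Z *\<^sub>v x = vec k (\<lambda>r. \<Sum>is\<in>index_tuples n t. complex_of_real (T is) * (?P is *\<^sub>v x) $ r)"
  proof (rule eq_vecI)
    fix r assume "r < dim_vec (vec k (\<lambda>r. \<Sum>is\<in>index_tuples n t. complex_of_real (T is) * (?P is *\<^sub>v x) $ r))"
    then have r: "r < k" by simp
    show "(?Z *\<^sub>v x) $ r = vec k (\<lambda>r. \<Sum>is\<in>index_tuples n t. complex_of_real (T is) * (?P is *\<^sub>v x) $ r) $ r"
      using te_entry[OF Uc xk r] r by simp
  qed (simp add: tensor_eval_def)
  have Pn: "vnorm (?P is *\<^sub>v x) = vnorm x" if "is \<in> index_tuples n t" for "is"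
    by (rule unitary_prod_vnorm) (use U that index_tuples_nth xk in auto)
  have Pd: "dim_vec (?P is *\<^sub>v x) = k" if "is \<in> index_tuples n t" for "is"
    using prod_mats_tuple_carrier[OF Uc that] by simp
  have "vnorm (?Z *\<^sub>v x) \<le> (\<Sum>is\<in>index_tuples n t. vnorm (vec k (\<lambda>r. complex_of_real (T is) * (?P is *\<^sub>v x) $ r)))"
    unfolding Zx by (rule vnorm_sum_le[OF finite_index_tuples])
  also have "\<dots> = (\<Sum>is\<in>index_tuples n t. \<bar>T is\<bar> * vnorm x)"
  proof (rule sum.cong[OF refl])
    fix xs assume xs: "xs \<in> index_tuples n t"
    show "vnorm (vec k (\<lambda>r. complex_of_real (T xs) * (?P xs *\<^sub>v x) $ r)) = \<bar>T xs\<bar> * vnorm x"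
      using vnorm_scale[OF Pd[OF xs], of "complex_of_real (T xs)"] Pn[OF xs] by simp
  qed
  also have "\<dots> \<le> (\<Sum>is\<in>index_tuples n t. \<bar>T is\<bar>)"
    by (rule sum_mono) (use x1 in \<open>simp add: mult_left_le\<close>)
  finally show "vnorm (?Z *\<^sub>v x) \<le> (\<Sum>is\<in>index_tuples n t. \<bar>T is\<bar>)" .
qed

lemma cb_ge:
  fixes T :: "nat list \<Rightarrow> real"
  assumes "k > 0" "\<forall>j<t. \<forall>i<n. unitary k (U j i)"
  shows "opnorm (tensor_eval n t k (\<lambda>is. complex_of_real (T is)) U) \<le> cb_norm n t T"
  unfolding cb_norm_def
proof (rule cSup_upper)
  show "opnorm (tensor_eval n t k (\<lambda>is. complex_of_real (T is)) U) \<in> {opnorm (tensor_eval n t k (\<lambda>is. complex_of_real (T is)) U) | k U.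
      k > 0 \<and> (\<forall>j<t. \<forall>i<n. unitary k (U j i))}" using assms by blast
  show "bdd_above {opnorm (tensor_eval n t k (\<lambda>is. complex_of_real (T is)) U) | k U.
      k > 0 \<and> (\<forall>j<t. \<forall>i<n. unitary k (U j i))}"
    unfolding bdd_above_def using te_opnorm_bound by blast
qed

lemma dilation_bound:
  fixes A :: "nat \<Rightarrow> real mat" and S :: "nat list \<Rightarrow> real"
  assumes m: "m > 0" and A: "\<And>i. i < n \<Longrightarrow> A i \<in> carrier_mat m m"
    and c: "\<And>i. i < n \<Longrightarrow> contraction (A i)"
    and x: "x \<in> carrier_vec m" and x1: "vnorm x \<le> 1"
  shows "vnorm (tensor_eval n t m S (\<lambda>_ i. A i) *\<^sub>v x) \<le> cb_norm n t S"
proof -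
  have "\<forall>i. \<exists>W. i < n \<longrightarrow> (W \<in> carrier_mat (3*m) (3*m) \<and> W * transpose_mat W = 1\<^sub>m (3*m) \<and>
     transpose_mat W * W = 1\<^sub>m (3*m) \<and> (\<forall>r<m. \<forall>s<m. W $$ (r,s) = A i $$ (r,s)))"
    using dilation[OF A c] by blast
  then obtain Wf where Wf: "\<And>i. i < n \<Longrightarrow> Wf i \<in> carrier_mat (3*m) (3*m) \<and> Wf i * transpose_mat (Wf i) = 1\<^sub>m (3*m) \<and>
     transpose_mat (Wf i) * Wf i = 1\<^sub>m (3*m) \<and> (\<forall>r<m. \<forall>s<m. Wf i $$ (r,s) = A i $$ (r,s))"
    by metis
  define k where "k = m + 2*m*t"
  have k0: "k > 0" using m by (simp add: k_def)
  define Ur where "Ur j i = embm k (3*m) (slotf m j) (Wf i)" for j i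
  have Urc: "\<forall>j<t. \<forall>i<n. Ur j i \<in> carrier_mat k k" by (simp add: Ur_def embm_carrier)
  have orth: "Ur j i * transpose_mat (Ur j i) = 1\<^sub>m k \<and> transpose_mat (Ur j i) * Ur j i = 1\<^sub>m k"
    if j: "j < t" and i: "i < n" for j i
  proof
    note Wi = Wf[OF i]
    show "Ur j i * transpose_mat (Ur j i) = 1\<^sub>m k"
      unfolding Ur_def k_def by (rule embm_orth[OF slotf_inj slotf_img[OF j]]) (use Wi in auto)
    have WT: "transpose_mat (Wf i) \<in> carrier_mat (3*m) (3*m)" using Wi by simp
    have "transpose_mat (Ur j i) * transpose_mat (transpose_mat (Ur j i)) = 1\<^sub>m k"
      unfolding Ur_def k_def embm_transpose[OF conjunct1[OF Wi] slotf_inj]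
      by (rule embm_orth[OF slotf_inj slotf_img[OF j] WT]) (use Wi in auto)
    then show "transpose_mat (Ur j i) * Ur j i = 1\<^sub>m k" by simp
  qed
  define Uc where "Uc j i = cmat (Ur j i)" for j i
  have Ucu: "\<forall>j<t. \<forall>i<n. unitary k (Uc j i)"
    unfolding Uc_def using Urc orth by (auto intro!: unitary_cmat)
  define xt where "xt = vec k (\<lambda>r. if r < m then x$r else 0)"
  have xt: "xt \<in> carrier_vec k" by (simp add: xt_def)
  have vxt: "vnorm xt = vnorm x"
  proof -
    have "(\<Sum>i<k. (norm (xt $ i))^2) = (\<Sum>i<m. (norm (xt $ i))^2) + (\<Sum>l<2*m*t. (norm (xt $ (m + l)))^2)"
      unfolding k_def by (rule sum_split_add)
    also have "\<dots> = (\<Sum>i<m. (norm (x $ i))^2)" by (simp add: xt_def k_def)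
    finally show ?thesis using x xt by (simp add: vnorm_def)
  qed
  define Zr where "Zr = tensor_eval n t k S Ur"
  define Y where "Y = tensor_eval n t m S (\<lambda>_ i. A i)"
  have Ac: "\<forall>j<t. \<forall>i<n. A i \<in> carrier_mat m m" using A by simp
  have YZ: "(Y *\<^sub>v x) $ r = (Zr *\<^sub>v xt) $ r" if r: "r < m" for r
  proof -
    have "(Y *\<^sub>v x) $ r = (\<Sum>is\<in>index_tuples n t. S is * (prod_mats m (map (\<lambda>j. A (is!j)) [0..<t]) *\<^sub>v x) $ r)"
      unfolding Y_def using te_entry[OF Ac x r] by simp
    also have "\<dots> = (\<Sum>is\<in>index_tuples n t. S is * (prod_mats k (map (\<lambda>j. Ur j (is!j)) [0..<t]) *\<^sub>v xt) $ r)"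
    proof (rule sum.cong[OF refl])
      fix xs assume xs: "xs \<in> index_tuples n t"
      show "S xs * (prod_mats m (map (\<lambda>j. A (xs!j)) [0..<t]) *\<^sub>v x) $ r =
          S xs * (prod_mats k (map (\<lambda>j. Ur j (xs!j)) [0..<t]) *\<^sub>v xt) $ r"
        using compress[of n A m Wf xs t x r] A Wf xs x r unfolding Ur_def xt_def k_def by auto
    qed
    also have "\<dots> = (Zr *\<^sub>v xt) $ r"
      unfolding Zr_def using te_entry[OF Urc xt, of r] r by (simp add: k_def)
    finally show ?thesis .
  qed
  have Zrd: "Zr \<in> carrier_mat k k" by (simp add: Zr_def tensor_eval_def)
  have Yd: "Y \<in> carrier_mat m m" by (simp add: Y_def tensor_eval_def)
  have "vnorm (Y *\<^sub>v x) \<le> vnorm (Zr *\<^sub>v xt)"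
  proof -
    have "(\<Sum>r<m. (norm ((Y *\<^sub>v x) $ r))^2) = (\<Sum>r<m. (norm ((Zr *\<^sub>v xt) $ r))^2)"
      using YZ by simp
    also have "\<dots> \<le> (\<Sum>r<k. (norm ((Zr *\<^sub>v xt) $ r))^2)"
      by (rule sum_mono2) (auto simp: k_def)
    finally show ?thesis using Yd Zrd by (simp add: vnorm_def)
  qed
  also have "vnorm (Zr *\<^sub>v xt) = vnorm (cmat Zr *\<^sub>v cvec xt)"
    using Zrd xt by (simp add: cmat_mult_vec vnorm_cvec)
  also have "cmat Zr = tensor_eval n t k (\<lambda>is. complex_of_real (S is)) Uc"
    unfolding Zr_def Uc_def using cmat_tensor_eval[OF Urc] by simp
  also have "vnorm (tensor_eval n t k (\<lambda>is. complex_of_real (S is)) Uc *\<^sub>v cvec xt)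
      \<le> opnorm (tensor_eval n t k (\<lambda>is. complex_of_real (S is)) Uc)"
    by (rule opnorm_ge) (use xt vxt x1 in \<open>auto simp: tensor_eval_def vnorm_cvec\<close>)
  also have "\<dots> \<le> cb_norm n t S" by (rule cb_ge[OF k0 Ucu])
  finally show ?thesis unfolding Y_def .
qed

definition permlist :: "(nat \<Rightarrow> nat) \<Rightarrow> nat list \<Rightarrow> nat list" where
  "permlist \<sigma> xs = map (\<lambda>j. xs ! \<sigma> j) [0..<length xs]"

lemma tensor_perm_permlist: "tensor_perm T \<sigma> xs = T (permlist \<sigma> xs)"
  by (simp add: tensor_perm_def permlist_def)

lemma length_permlist[simp]: "length (permlist \<sigma> xs) = length xs"
  by (simp add: permlist_def)

lemma nth_permlist: "j < length xs \<Longrightarrow> permlist \<sigma> xs ! j = xs ! \<sigma> j"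
  by (simp add: permlist_def)

lemma permlist_index_tuples:
  assumes s: "\<sigma> permutes {..<t}" and xs: "xs \<in> index_tuples n t"
  shows "permlist \<sigma> xs \<in> index_tuples n t"
proof -
  have len: "length xs = t" using xs by (simp add: index_tuples_def)
  have "set (permlist \<sigma> xs) \<subseteq> {..<n}"
  proof
    fix a assume "a \<in> set (permlist \<sigma> xs)"
    then obtain j where j: "j < t" "a = xs ! \<sigma> j" by (auto simp: permlist_def len)
    have "\<sigma> j < t" using permutes_in_image[OF s] j by auto
    then show "a \<in> {..<n}" using j xs index_tuples_nth by blast
  qed
  then show ?thesis using len by (simp add: index_tuples_def)
qed

lemma permlist_inv:
  assumes s: "\<sigma> permutes {..<length xs}"
  shows "permlist (inv_into UNIV \<sigma>) (permlist \<sigma> xs) = xs"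
proof (rule nth_equalityI)
  show "length (permlist (inv_into UNIV \<sigma>) (permlist \<sigma> xs)) = length xs" by simp
  fix j assume "j < length (permlist (inv_into UNIV \<sigma>) (permlist \<sigma> xs))"
  then have j: "j < length xs" by simp
  have ij: "inv_into UNIV \<sigma> j < length xs" using permutes_in_image[OF permutes_inv[OF s]] j by auto
  show "permlist (inv_into UNIV \<sigma>) (permlist \<sigma> xs) ! j = xs ! j"
    using j ij by (simp add: nth_permlist permutes_inverses(1)[OF s])
qed

lemma permlist_bij:
  assumes s: "\<sigma> permutes {..<t}"
  shows "bij_betw (permlist \<sigma>) (index_tuples n t) (index_tuples n t)"
proof (rule bij_betw_byWitness[where f' = "permlist (inv_into UNIV \<sigma>)"])
  have si: "inv_into UNIV \<sigma> permutes {..<t}" by (rule permutes_inv[OF s])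
  show "\<forall>a\<in>index_tuples n t. permlist (inv_into UNIV \<sigma>) (permlist \<sigma> a) = a"
    using permlist_inv s by (auto simp: index_tuples_def)
  show "\<forall>a\<in>index_tuples n t. permlist \<sigma> (permlist (inv_into UNIV \<sigma>) a) = a"
    using permlist_inv[of "inv_into UNIV \<sigma>"] si inv_inv_eq[OF permutes_bij[OF s]] by (auto simp: index_tuples_def)
  show "permlist \<sigma> ` index_tuples n t \<subseteq> index_tuples n t"
    using permlist_index_tuples[OF s] by auto
  show "permlist (inv_into UNIV \<sigma>) ` index_tuples n t \<subseteq> index_tuples n t"
    using permlist_index_tuples[OF si] by auto
qed

lemma mset_permlist:
  assumes s: "\<sigma> permutes {..<length xs}"
  shows "mset (permlist \<sigma> xs) = mset xs"
proof -
  let ?t = "length xs"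
  have d: "distinct (map \<sigma> [0..<?t])"
    using permutes_inj_on[OF s] by (simp add: distinct_map inj_on_def)
  have st: "set (map \<sigma> [0..<?t]) = {..<?t}"
    using permutes_image[OF s] by (simp add: atLeast0LessThan)
  have "mset (map \<sigma> [0..<?t]) = mset [0..<?t]"
    using d st by (metis distinct_upt mset_set_set set_upt atLeast0LessThan)
  then have "mset (map ((!) xs) (map \<sigma> [0..<?t])) = mset (map ((!) xs) [0..<?t])"
    by (simp only: mset_map)
  then show ?thesis by (simp add: permlist_def map_nth comp_def)
qed

lemma foldr_append_mult:
  fixes l1 l2 :: "'a::semiring_1 mat list"
  assumes "set l1 \<subseteq> carrier_mat k k" "set l2 \<subseteq> carrier_mat k k"
  shows "foldr (*) (l1 @ l2) (1\<^sub>m k) = foldr (*) l1 (1\<^sub>m k) * foldr (*) l2 (1\<^sub>m k)"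
  using assms
proof (induction l1)
  case Nil
  have "foldr (*) l2 (1\<^sub>m k) \<in> carrier_mat k k" using Nil by (intro foldr_mult_carrier) auto
  then show ?case by simp
next
  case (Cons a l1)
  have a: "a \<in> carrier_mat k k" using Cons by auto
  have F1: "foldr (*) l1 (1\<^sub>m k) \<in> carrier_mat k k" using Cons by (intro foldr_mult_carrier) auto
  have F2: "foldr (*) l2 (1\<^sub>m k) \<in> carrier_mat k k" using Cons by (intro foldr_mult_carrier) auto
  show ?case using Cons assoc_mult_mat[OF a F1 F2] by simp
qed

lemma comm_foldr:
  fixes S :: "'a::semiring_1 mat set"
  assumes S: "S \<subseteq> carrier_mat k k" and comm: "\<forall>a\<in>S. \<forall>b\<in>S. a * b = b * a"
    and a: "a \<in> S" and zs: "set zs \<subseteq> S"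
  shows "a * foldr (*) zs (1\<^sub>m k) = foldr (*) zs (1\<^sub>m k) * a"
  using zs
proof (induction zs)
  case Nil
  have "a \<in> carrier_mat k k" using a S by auto
  then show ?case by simp
next
  case (Cons z zs)
  have ac: "a \<in> carrier_mat k k" and zc: "z \<in> carrier_mat k k" using a S Cons by auto
  have F: "foldr (*) zs (1\<^sub>m k) \<in> carrier_mat k k" using Cons S by (intro foldr_mult_carrier) auto
  have az: "a * z = z * a" using comm a Cons by auto
  have "a * (z * foldr (*) zs (1\<^sub>m k)) = (a * z) * foldr (*) zs (1\<^sub>m k)"
    using assoc_mult_mat[OF ac zc F] by simp
  also have "\<dots> = z * (a * foldr (*) zs (1\<^sub>m k))" using az assoc_mult_mat[OF zc ac F] by simp
  also have "\<dots> = z * (foldr (*) zs (1\<^sub>m k) * a)" using Cons by simp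
  also have "\<dots> = (z * foldr (*) zs (1\<^sub>m k)) * a" using assoc_mult_mat[OF zc F ac] by simp
  finally show ?case by simp
qed

lemma foldr_commute_perm:
  fixes S :: "'a::semiring_1 mat set"
  assumes S: "S \<subseteq> carrier_mat k k" and comm: "\<forall>a\<in>S. \<forall>b\<in>S. a * b = b * a"
  shows "set xs \<subseteq> S \<Longrightarrow> mset xs = mset ys \<Longrightarrow> foldr (*) xs (1\<^sub>m k) = foldr (*) ys (1\<^sub>m k)"
proof (induction xs arbitrary: ys)
  case Nil then show ?case by simp
next
  case (Cons x xs)
  have "x \<in> set ys" using Cons.prems(2) by (metis list.set_intros(1) set_mset_mset)
  then obtain ys1 ys2 where ys: "ys = ys1 @ x # ys2" by (meson split_list)
  have m: "mset xs = mset (ys1 @ ys2)" using Cons.prems(2) ys by simp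
  have sys: "set ys \<subseteq> S" using Cons.prems by (metis set_mset_mset)
  have s1: "set ys1 \<subseteq> S" "set ys2 \<subseteq> S" "x \<in> S" using sys ys by auto
  have xc: "x \<in> carrier_mat k k" using s1 S by auto
  have F1: "foldr (*) ys1 (1\<^sub>m k) \<in> carrier_mat k k" using s1 S by (intro foldr_mult_carrier) auto
  have F2: "foldr (*) ys2 (1\<^sub>m k) \<in> carrier_mat k k" using s1 S by (intro foldr_mult_carrier) auto
  have "foldr (*) ys (1\<^sub>m k) = foldr (*) ys1 (1\<^sub>m k) * (x * foldr (*) ys2 (1\<^sub>m k))"
    unfolding ys using foldr_append_mult[of ys1 k "x # ys2"] s1 S by auto
  also have "\<dots> = (foldr (*) ys1 (1\<^sub>m k) * x) * foldr (*) ys2 (1\<^sub>m k)"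
    using assoc_mult_mat[OF F1 xc F2] by simp
  also have "\<dots> = (x * foldr (*) ys1 (1\<^sub>m k)) * foldr (*) ys2 (1\<^sub>m k)"
    using comm_foldr[OF S comm s1(3) s1(1)] by simp
  also have "\<dots> = x * (foldr (*) ys1 (1\<^sub>m k) * foldr (*) ys2 (1\<^sub>m k))"
    using assoc_mult_mat[OF xc F1 F2] by simp
  also have "\<dots> = x * foldr (*) (ys1 @ ys2) (1\<^sub>m k)"
    using foldr_append_mult[of ys1 k ys2] s1 S by auto
  also have "\<dots> = x * foldr (*) xs (1\<^sub>m k)"
    using Cons.IH[OF _ m] Cons.prems(1) by simp
  finally show ?case by simp
qed

lemma prod_perm_invariant:
  fixes A :: "nat \<Rightarrow> 'a::semiring_1 mat"
  assumes A: "\<And>i. i < n \<Longrightarrow> A i \<in> carrier_mat m m"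
    and comm: "\<And>i j. i < n \<Longrightarrow> j < n \<Longrightarrow> A i * A j = A j * A i"
    and s: "\<sigma> permutes {..<t}" and xs: "xs \<in> index_tuples n t"
  shows "prod_mats m (map (\<lambda>j. A (permlist \<sigma> xs ! j)) [0..<t]) = prod_mats m (map (\<lambda>j. A (xs ! j)) [0..<t])"
proof -
  have len: "length xs = t" using xs by (simp add: index_tuples_def)
  have e1: "map (\<lambda>j. A (permlist \<sigma> xs ! j)) [0..<t] = map A (permlist \<sigma> xs)"
    using len by (intro nth_equalityI) auto
  have e2: "map (\<lambda>j. A (xs ! j)) [0..<t] = map A xs"
    using len by (intro nth_equalityI) auto
  have S: "A ` {..<n} \<subseteq> carrier_mat m m" using A by auto
  have C: "\<forall>a\<in>A ` {..<n}. \<forall>b\<in>A ` {..<n}. a * b = b * a" using comm by auto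
  have "set (map A (permlist \<sigma> xs)) \<subseteq> A ` {..<n}"
    using permlist_index_tuples[OF s xs] by (auto simp: index_tuples_def)
  moreover have "mset (map A (permlist \<sigma> xs)) = mset (map A xs)"
    using mset_permlist[of \<sigma> xs] s len by simp
  ultimately show ?thesis unfolding e1 e2 prod_mats_def
    using foldr_commute_perm[OF S C] by simp
qed

lemma form_tensor_permlist:
  assumes s: "\<sigma> permutes {..<t}" and xs: "xs \<in> index_tuples n t"
  shows "form_tensor c (permlist \<sigma> xs) = form_tensor c xs"
proof -
  have len: "length xs = t" using xs by (simp add: index_tuples_def)
  have "mset (permlist \<sigma> xs) = mset xs" using mset_permlist[of \<sigma> xs] s len by simp
  then show ?thesis by (simp add: form_tensor_def tau_def)
qed

theorem proposition4p4:
  fixes m n t :: nat and c :: "nat multiset \<Rightarrow> real" and A :: "nat \<Rightarrow> real mat"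
  assumes "m > 0" and "n > 0" and "t > 0"
    and "is_form n t c"
    and "\<And>i. i < n \<Longrightarrow> A i \<in> carrier_mat m m"
    and "\<And>i. i < n \<Longrightarrow> contraction (A i)"
    and "\<And>i j. i < n \<Longrightarrow> j < n \<Longrightarrow> A i * A j = A j * A i"
  shows "form_cb_norm n t c \<ge>
           opnorm (tensor_eval n t m (form_tensor c) (\<lambda>_ i. A i))"
proof -
  note m = assms(1) and Ac = assms(5) and con = assms(6) and comm = assms(7)
  let ?X = "tensor_eval n t m (form_tensor c) (\<lambda>_ i. A i)"
  let ?Perms = "{\<sigma>. \<sigma> permutes {..<t}}"
  let ?D = "{(\<Sum>\<sigma>\<in>?Perms. cb_norm n t (Ts \<sigma>)) | Ts.
      \<forall>is\<in>index_tuples n t. form_tensor c is = (\<Sum>\<sigma>\<in>?Perms. tensor_perm (Ts \<sigma>) \<sigma> is)}"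
  let ?P = "\<lambda>is. prod_mats m (map (\<lambda>j. A (is!j)) [0..<t])"
  have finP: "finite ?Perms" by (rule finite_permutations) simp
  have cardP: "card ?Perms = fact t" by (rule card_permutations) simp_all
  have AcM: "\<forall>j<t. \<forall>i<n. A i \<in> carrier_mat m m" using Ac by simp
  have ne: "?D \<noteq> {}"
  proof -
    define Ts0 where "Ts0 \<sigma> is = form_tensor c is / fact t" for \<sigma> :: "nat \<Rightarrow> nat" and "is"
    have "\<forall>is\<in>index_tuples n t. form_tensor c is = (\<Sum>\<sigma>\<in>?Perms. tensor_perm (Ts0 \<sigma>) \<sigma> is)"
    proof
      fix xs assume xs: "xs \<in> index_tuples n t"
      have "(\<Sum>\<sigma>\<in>?Perms. tensor_perm (Ts0 \<sigma>) \<sigma> xs) = (\<Sum>\<sigma>\<in>?Perms. form_tensor c xs / fact t)"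
        by (rule sum.cong[OF refl]) (use xs in \<open>simp add: tensor_perm_permlist Ts0_def form_tensor_permlist\<close>)
      also have "\<dots> = form_tensor c xs" using cardP by simp
      finally show "form_tensor c xs = (\<Sum>\<sigma>\<in>?Perms. tensor_perm (Ts0 \<sigma>) \<sigma> xs)" by simp
    qed
    then show ?thesis by blast
  qed
  have bound: "opnorm ?X \<le> d" if "d \<in> ?D" for d
  proof -
    obtain Ts where d: "d = (\<Sum>\<sigma>\<in>?Perms. cb_norm n t (Ts \<sigma>))"
      and dec: "\<forall>is\<in>index_tuples n t. form_tensor c is = (\<Sum>\<sigma>\<in>?Perms. tensor_perm (Ts \<sigma>) \<sigma> is)"
      using \<open>d \<in> ?D\<close> by blast
    let ?Y = "\<lambda>\<sigma>. tensor_eval n t m (Ts \<sigma>) (\<lambda>_ i. A i)"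
    show ?thesis unfolding d
    proof (rule opnorm_le)
      fix x :: "real vec" assume x: "x \<in> carrier_vec (dim_col ?X)" and x1: "vnorm x \<le> 1"
      have xm: "x \<in> carrier_vec m" using x by (simp add: tensor_eval_def)
      have entry: "(?X *\<^sub>v x) $ r = (\<Sum>\<sigma>\<in>?Perms. (?Y \<sigma> *\<^sub>v x) $ r)" if r: "r < m" for r
      proof -
        have "(?X *\<^sub>v x) $ r = (\<Sum>is\<in>index_tuples n t. form_tensor c is * (?P is *\<^sub>v x) $ r)"
          using te_entry[OF AcM xm r] by simp
        also have "\<dots> = (\<Sum>is\<in>index_tuples n t. \<Sum>\<sigma>\<in>?Perms. Ts \<sigma> (permlist \<sigma> is) * (?P is *\<^sub>v x) $ r)"
          by (rule sum.cong[OF refl]) (simp add: dec tensor_perm_permlist sum_distrib_right)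
        also have "\<dots> = (\<Sum>\<sigma>\<in>?Perms. \<Sum>is\<in>index_tuples n t. Ts \<sigma> (permlist \<sigma> is) * (?P is *\<^sub>v x) $ r)"
          by (rule sum.swap)
        also have "\<dots> = (\<Sum>\<sigma>\<in>?Perms. \<Sum>is\<in>index_tuples n t. Ts \<sigma> (permlist \<sigma> is) * (?P (permlist \<sigma> is) *\<^sub>v x) $ r)"
        proof (rule sum.cong[OF refl], rule sum.cong[OF refl])
          fix \<sigma> xs assume s: "\<sigma> \<in> ?Perms" and xs: "xs \<in> index_tuples n t"
          show "Ts \<sigma> (permlist \<sigma> xs) * (?P xs *\<^sub>v x) $ r = Ts \<sigma> (permlist \<sigma> xs) * (?P (permlist \<sigma> xs) *\<^sub>v x) $ r"
          proof -
            have sp: "\<sigma> permutes {..<t}" using s by simp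
            show ?thesis using prod_perm_invariant[where A=A and n=n and m=m, OF Ac comm sp xs] by simp
          qed
        qed
        also have "\<dots> = (\<Sum>\<sigma>\<in>?Perms. \<Sum>is\<in>index_tuples n t. Ts \<sigma> is * (?P is *\<^sub>v x) $ r)"
        proof (rule sum.cong[OF refl])
          fix \<sigma> assume s: "\<sigma> \<in> ?Perms"
          show "(\<Sum>is\<in>index_tuples n t. Ts \<sigma> (permlist \<sigma> is) * (?P (permlist \<sigma> is) *\<^sub>v x) $ r) =
              (\<Sum>is\<in>index_tuples n t. Ts \<sigma> is * (?P is *\<^sub>v x) $ r)"
            using sum.reindex_bij_betw[OF permlist_bij[of \<sigma> t n], of "\<lambda>is. Ts \<sigma> is * (?P is *\<^sub>v x) $ r"] s
            by simp
        qed
        also have "\<dots> = (\<Sum>\<sigma>\<in>?Perms. (?Y \<sigma> *\<^sub>v x) $ r)"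
          by (rule sum.cong[OF refl]) (use te_entry[OF AcM xm r] in simp)
        finally show ?thesis .
      qed
      have Xx: "?X *\<^sub>v x = vec m (\<lambda>r. \<Sum>\<sigma>\<in>?Perms. (?Y \<sigma> *\<^sub>v x) $ r)"
      proof (rule eq_vecI)
        fix r assume "r < dim_vec (vec m (\<lambda>r. \<Sum>\<sigma>\<in>?Perms. (?Y \<sigma> *\<^sub>v x) $ r))"
        then have r: "r < m" by simp
        show "(?X *\<^sub>v x) $ r = vec m (\<lambda>r. \<Sum>\<sigma>\<in>?Perms. (?Y \<sigma> *\<^sub>v x) $ r) $ r"
          using entry[OF r] r by simp
      qed (simp add: tensor_eval_def)
      have "vnorm (?X *\<^sub>v x) \<le> (\<Sum>\<sigma>\<in>?Perms. vnorm (vec m (\<lambda>r. (?Y \<sigma> *\<^sub>v x) $ r)))"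
        unfolding Xx by (rule vnorm_sum_le[OF finP])
      also have "\<dots> = (\<Sum>\<sigma>\<in>?Perms. vnorm (?Y \<sigma> *\<^sub>v x))"
      proof (rule sum.cong[OF refl])
        fix \<sigma>
        have "vec m (\<lambda>r. (?Y \<sigma> *\<^sub>v x) $ r) = ?Y \<sigma> *\<^sub>v x" by (intro eq_vecI) (auto simp: tensor_eval_def)
        then show "vnorm (vec m (\<lambda>r. (?Y \<sigma> *\<^sub>v x) $ r)) = vnorm (?Y \<sigma> *\<^sub>v x)" by simp
      qed
      also have "\<dots> \<le> (\<Sum>\<sigma>\<in>?Perms. cb_norm n t (Ts \<sigma>))"
        by (rule sum_mono) (rule dilation_bound[OF m Ac con xm x1])
      finally show "vnorm (?X *\<^sub>v x) \<le> (\<Sum>\<sigma>\<in>?Perms. cb_norm n t (Ts \<sigma>))" .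
    qed
  qed
  have "opnorm ?X \<le> Inf ?D" by (rule cInf_greatest[OF ne bound])
  then show ?thesis unfolding form_cb_norm_def by simp
qed

end
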